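(* The algebra $bH_n(q)$ is a free $\mathbb{S}$--module with basis $\mathcal{G}_n=\{\operatorname{E}_\mathbf{I} z_w\mid \mathbf{I}\in\mathcal{LP}_n,\ w\in\mathfrak{S}_{\|\mathbf{I}\|}\}$. In particular \[\dim bH_n(q)=\sum_{(\mu_1,\ldots,\mu_k)\in\mathcal{C}_n}\mu_1!\cdots\mu_k!,\] where $\mathcal{C}_n$ is the set of compositions of $n$ with no zero parts.
   Context: $\mathbb{S}=\mathbb{C}[q,q^{-1}]$. The tied--boxed Hecke algebra $bH_n(q)$ is the $\mathbb{S}$--algebra presented by generators $e_1,\dots,e_{n-1}$, $z_1,\dots,z_{n-1}$ and relations: $e_i^2=e_i$, $e_ie_j=e_je_i$ (all $i,j$); $z_iz_jz_i=z_jz_iz_j$ if $|i-j|=1$, $z_iz_j=z_jz_i$ if $|i-j|>1$; $e_iz_i=z_i$; $e_iz_j=z_je_i$ (all $i,j$); $z_i^2=e_i+(q-q^{-1})z_i$. $\mathcal{LP}_n$ is the set of linear set partitions of $[n]$ (all blocks are intervals). For $\mathbf{I}\in\mathcal{LP}_n$, $\operatorname{E}_\mathbf{I}=\prod e_i$, the product over those $i\in[n-1]$ such that $i$ and $i+1$ lie in the same block of $\mathbf{I}$; $\|\mathbf{I}\|$ is the composition of block sizes (in increasing order of blocks), and $\mathfrak{S}_{\|\mathbf{I}\|}$ is the Young subgroup of $\mathfrak{S}_n$ of permutations preserving each block of $\mathbf{I}$. For $w\in\mathfrak{S}_n$ with reduced expression $s_{i_1}\cdots s_{i_k}$, $z_w=z_{i_1}\cdots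 z_{i_k}$ (independent of the reduced expression by the braid relations). *)

theory Defs
  imports Complex_Main "HOL-Library.Poly_Mapping" "HOL-Library.Disjoint_Sets"
    "HOL-Combinatorics.Permutations" "HOL-Combinatorics.Transposition"
begin

text \<open>The ring S = C[q,q^-1] of Laurent polynomials, realised as the group
  algebra of the integers (finitely supported functions int to complex with
  convolution product).\<close>
type_synonym laurent = "int \<Rightarrow>\<^sub>0 complex"

definition qL :: laurent where "qL = Poly_Mapping.single 1 1"
definition qLinv :: laurent where "qLinv = Poly_Mapping.single (-1) 1"

datatype gen = Eg nat | Zg nat

text \<open>The free associative S-algebra on the generators: finitely supported
  functions from words to S.\<close>
type_synonym fa = "gen list \<Rightarrow>\<^sub>0 laurent"

definition fa_mult :: "fa \<Rightarrow> fa \<Rightarrow> fa" where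
  "fa_mult a b = (\<Sum>x\<in>Poly_Mapping.keys a. \<Sum>y\<in>Poly_Mapping.keys b.
      Poly_Mapping.single (x @ y) (Poly_Mapping.lookup a x * Poly_Mapping.lookup b y))"

definition fa_word :: "gen list \<Rightarrow> fa" where
  "fa_word w = Poly_Mapping.single w 1"

definition fa_scal :: "laurent \<Rightarrow> fa \<Rightarrow> fa" where
  "fa_scal s a = fa_mult (Poly_Mapping.single [] s) a"

definition gen_valid :: "nat \<Rightarrow> gen \<Rightarrow> bool" where
  "gen_valid n g = (case g of Eg i \<Rightarrow> 1 \<le> i \<and> i < n | Zg i \<Rightarrow> 1 \<le> i \<and> i < n)"

definition FA :: "nat \<Rightarrow> fa set" where
  "FA n = {a. \<forall>w\<in>Poly_Mapping.keys a. \<forall>g\<in>set w. gen_valid n g}"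

text \<open>Defining relations of bH_n(q), written as lhs - rhs.\<close>
definition bH_rels :: "nat \<Rightarrow> fa set" where
  "bH_rels n =
     {fa_word [Eg i, Eg i] - fa_word [Eg i] | i. 1 \<le> i \<and> i < n}
   \<union> {fa_word [Eg i, Eg j] - fa_word [Eg j, Eg i] | i j. 1 \<le> i \<and> i < n \<and> 1 \<le> j \<and> j < n}
   \<union> {fa_word [Zg i, Zg j, Zg i] - fa_word [Zg j, Zg i, Zg j] | i j.
        1 \<le> i \<and> i < n \<and> 1 \<le> j \<and> j < n \<and> (j = Suc i \<or> i = Suc j)}
   \<union> {fa_word [Zg i, Zg j] - fa_word [Zg j, Zg i] | i j.
        1 \<le> i \<and> i < n \<and> 1 \<le> j \<and> j < n \<and> Suc i < j \<or> 1 \<le> i \<and> i < n \<and> 1 \<le> j \<and> j < n \<and> Suc j < i}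
   \<union> {fa_word [Eg i, Zg i] - fa_word [Zg i] | i. 1 \<le> i \<and> i < n}
   \<union> {fa_word [Eg i, Zg j] - fa_word [Zg j, Eg i] | i j. 1 \<le> i \<and> i < n \<and> 1 \<le> j \<and> j < n}
   \<union> {fa_word [Zg i, Zg i] - fa_word [Eg i] - fa_scal (qL - qLinv) (fa_word [Zg i]) | i.
        1 \<le> i \<and> i < n}"

text \<open>Two-sided ideal of the free algebra FA n generated by the relations;
  bH_n(q) is the quotient FA n / bH_ideal n.\<close>
inductive_set bH_ideal :: "nat \<Rightarrow> fa set" for n :: nat where
  rel: "r \<in> bH_rels n \<Longrightarrow> r \<in> bH_ideal n"
| zero: "0 \<in> bH_ideal n"
| add: "a \<in> bH_ideal n \<Longrightarrow> b \<in> bH_ideal n \<Longrightarrow> a + b \<in> bH_ideal n"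
| lmult: "x \<in> FA n \<Longrightarrow> a \<in> bH_ideal n \<Longrightarrow> fa_mult x a \<in> bH_ideal n"
| rmult: "x \<in> FA n \<Longrightarrow> a \<in> bH_ideal n \<Longrightarrow> fa_mult a x \<in> bH_ideal n"

definition LP :: "nat \<Rightarrow> nat set set set" where
  "LP n = {P. partition_on {1..n} P \<and> (\<forall>B\<in>P. \<exists>a b. B = {a..b})}"

definition E_word :: "nat \<Rightarrow> nat set set \<Rightarrow> gen list" where
  "E_word n P = [Eg i. i \<leftarrow> [1..<n], \<exists>B\<in>P. i \<in> B \<and> Suc i \<in> B]"

definition young :: "nat \<Rightarrow> nat set set \<Rightarrow> (nat \<Rightarrow> nat) set" where
  "young n P = {w. w permutes {1..n} \<and> (\<forall>B\<in>P. w ` B = B)}"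

definition perm_of_word :: "nat list \<Rightarrow> nat \<Rightarrow> nat" where
  "perm_of_word is = foldr (\<lambda>i f. transpose i (Suc i) \<circ> f) is id"

definition reduced_word :: "nat \<Rightarrow> (nat \<Rightarrow> nat) \<Rightarrow> nat list \<Rightarrow> bool" where
  "reduced_word n w is \<longleftrightarrow> set is \<subseteq> {1..<n} \<and> perm_of_word is = w \<and>
     (\<forall>js. set js \<subseteq> {1..<n} \<and> perm_of_word js = w \<longrightarrow> length is \<le> length js)"

text \<open>z_w via a (chosen) reduced expression of w.\<close>
definition z_word :: "nat \<Rightarrow> (nat \<Rightarrow> nat) \<Rightarrow> gen list" where
  "z_word n w = map Zg (SOME is. reduced_word n w is)"

definition Gidx :: "nat \<Rightarrow> (nat set set \<times> (nat \<Rightarrow> nat)) set" where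
  "Gidx n = {(P, w). P \<in> LP n \<and> w \<in> young n P}"

definition basis_elt :: "nat \<Rightarrow> nat set set \<times> (nat \<Rightarrow> nat) \<Rightarrow> fa" where
  "basis_elt n x = fa_word (E_word n (fst x) @ z_word n (snd x))"

definition compositions :: "nat \<Rightarrow> nat list set" where
  "compositions n = {xs. sum_list xs = n \<and> 0 \<notin> set xs}"

end

theory Submission
  imports Defs
begin


lemma pm_decomp: "(a::('x \<Rightarrow>\<^sub>0 'b::comm_monoid_add)) = (\<Sum>x\<in>Poly_Mapping.keys a. Poly_Mapping.single x (Poly_Mapping.lookup a x))"
proof (rule poly_mapping_eqI)
  fix k
  show "Poly_Mapping.lookup a k = Poly_Mapping.lookup (\<Sum>x\<in>Poly_Mapping.keys a. Poly_Mapping.single x (Poly_Mapping.lookup a x)) k"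
    by (cases "k \<in> Poly_Mapping.keys a")
       (auto simp: lookup_sum lookup_single when_def in_keys_iff sum.delta)
qed

lemma fa_mult_eq:
  assumes "finite X" "Poly_Mapping.keys a \<subseteq> X" "finite Y" "Poly_Mapping.keys b \<subseteq> Y"
  shows "fa_mult a b = (\<Sum>x\<in>X. \<Sum>y\<in>Y. Poly_Mapping.single (x @ y) (Poly_Mapping.lookup a x * Poly_Mapping.lookup b y))"
proof -
  have "fa_mult a b = (\<Sum>x\<in>X. \<Sum>y\<in>Poly_Mapping.keys b. Poly_Mapping.single (x @ y) (Poly_Mapping.lookup a x * Poly_Mapping.lookup b y))"
    unfolding fa_mult_def
    by (rule sum.mono_neutral_left) (use assms in \<open>auto simp: in_keys_iff\<close>)
  also have "\<dots> = (\<Sum>x\<in>X. \<Sum>y\<in>Y. Poly_Mapping.single (x @ y) (Poly_Mapping.lookup a x * Poly_Mapping.lookup b y))"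
    by (rule sum.cong[OF refl], rule sum.mono_neutral_left) (use assms in \<open>auto simp: in_keys_iff\<close>)
  finally show ?thesis .
qed

lemma fa_mult_single: "fa_mult (Poly_Mapping.single x s) (Poly_Mapping.single y t) = Poly_Mapping.single (x @ y) (s * t)"
  by (subst fa_mult_eq[of "{x}" _ "{y}"]) auto

lemma fa_mult_add_left: "fa_mult (a + b) c = fa_mult a c + fa_mult b c"
proof -
  have k: "Poly_Mapping.keys (a+b) \<subseteq> Poly_Mapping.keys a \<union> Poly_Mapping.keys b" by (rule keys_add)
  show ?thesis
    apply (subst (1 2 3) fa_mult_eq[of "Poly_Mapping.keys a \<union> Poly_Mapping.keys b" _ "Poly_Mapping.keys c"])
    using k by (auto simp: lookup_add single_add distrib_right sum.distrib)
qed

lemma fa_mult_add_right: "fa_mult c (a + b) = fa_mult c a + fa_mult c b"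
proof -
  have k: "Poly_Mapping.keys (a+b) \<subseteq> Poly_Mapping.keys a \<union> Poly_Mapping.keys b" by (rule keys_add)
  show ?thesis
    apply (subst (1 2 3) fa_mult_eq[of "Poly_Mapping.keys c" _ "Poly_Mapping.keys a \<union> Poly_Mapping.keys b"])
    using k by (auto simp: lookup_add single_add distrib_left sum.distrib)
qed

lemma fa_mult_zero_left[simp]: "fa_mult 0 a = 0" by (simp add: fa_mult_def)
lemma fa_mult_zero_right[simp]: "fa_mult a 0 = 0" by (simp add: fa_mult_def)

lemma fa_mult_sum_left: "fa_mult (\<Sum>i\<in>I. f i) c = (\<Sum>i\<in>I. fa_mult (f i) c)"
  by (induction I rule: infinite_finite_induct) (auto simp: fa_mult_add_left)

lemma fa_mult_sum_right: "fa_mult c (\<Sum>i\<in>I. f i) = (\<Sum>i\<in>I. fa_mult c (f i))"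
  by (induction I rule: infinite_finite_induct) (auto simp: fa_mult_add_right)

lemma fa_mult_uminus_left: "fa_mult (- a) b = - fa_mult a b"
  by (metis add_eq_0_iff fa_mult_add_left fa_mult_zero_left)
lemma fa_mult_uminus_right: "fa_mult b (- a) = - fa_mult b a"
  by (metis add_eq_0_iff fa_mult_add_right fa_mult_zero_right)
lemma fa_mult_diff_left: "fa_mult (a - b) c = fa_mult a c - fa_mult b c"
  by (metis diff_conv_add_uminus fa_mult_add_left fa_mult_uminus_left)
lemma fa_mult_diff_right: "fa_mult c (a - b) = fa_mult c a - fa_mult c b"
  by (metis diff_conv_add_uminus fa_mult_add_right fa_mult_uminus_right)

lemma fa_mult_assoc1: "fa_mult (fa_mult (Poly_Mapping.single x s) (Poly_Mapping.single y t)) c = fa_mult (Poly_Mapping.single x s) (fa_mult (Poly_Mapping.single y t) c)"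
  apply (subst (1 2) pm_decomp[of c])
  by (simp add: fa_mult_sum_right fa_mult_single mult.assoc)

lemma fa_mult_assoc2: "fa_mult (fa_mult (Poly_Mapping.single x s) b) c = fa_mult (Poly_Mapping.single x s) (fa_mult b c)"
  apply (subst (1 2) pm_decomp[of b])
  by (simp add: fa_mult_sum_right fa_mult_sum_left fa_mult_assoc1)

lemma fa_mult_assoc: "fa_mult (fa_mult a b) c = fa_mult a (fa_mult b c)"
  apply (subst (1 2) pm_decomp[of a])
  by (simp add: fa_mult_sum_left fa_mult_assoc2)

lemma lookup_fa_scal: "Poly_Mapping.lookup (fa_scal s a) w = s * Poly_Mapping.lookup a w"
proof -
  have "fa_scal s a = (\<Sum>y\<in>Poly_Mapping.keys a. Poly_Mapping.single y (s * Poly_Mapping.lookup a y))"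
    unfolding fa_scal_def by (subst fa_mult_eq[of "{[]}" _ "Poly_Mapping.keys a"]) auto
  then show ?thesis
    by (cases "w \<in> Poly_Mapping.keys a") (auto simp: lookup_sum lookup_single when_def in_keys_iff)
qed

lemma fa_scal_add: "fa_scal s (a + b) = fa_scal s a + fa_scal s b"
  by (simp add: fa_scal_def fa_mult_add_right)
lemma fa_scal_add2: "fa_scal (s + t) a = fa_scal s a + fa_scal t a"
  by (rule poly_mapping_eqI) (simp add: lookup_fa_scal lookup_add distrib_right)
lemma fa_scal_sum: "fa_scal s (\<Sum>i\<in>I. f i) = (\<Sum>i\<in>I. fa_scal s (f i))"
  by (simp add: fa_scal_def fa_mult_sum_right)
lemma fa_scal_one[simp]: "fa_scal 1 a = a"
  by (rule poly_mapping_eqI) (simp add: lookup_fa_scal)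
lemma fa_scal_zero[simp]: "fa_scal 0 a = 0"
  by (rule poly_mapping_eqI) (simp add: lookup_fa_scal)
lemma fa_scal_zero2[simp]: "fa_scal s 0 = 0"
  by (rule poly_mapping_eqI) (simp add: lookup_fa_scal)
lemma fa_scal_scal: "fa_scal s (fa_scal t a) = fa_scal (s * t) a"
  by (rule poly_mapping_eqI) (simp add: lookup_fa_scal mult.assoc)
lemma fa_scal_single: "fa_scal s (Poly_Mapping.single w t) = Poly_Mapping.single w (s * t)"
  by (rule poly_mapping_eqI) (simp add: lookup_fa_scal lookup_single when_def)
lemma fa_scal_minus: "fa_scal (- s) a = - fa_scal s a"
  by (rule poly_mapping_eqI) (simp add: lookup_fa_scal)

lemma fa_mult_scal_left: "fa_mult (fa_scal s a) b = fa_scal s (fa_mult a b)"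
  by (simp add: fa_scal_def fa_mult_assoc)

lemma fa_mult_scal_right1: "fa_mult (Poly_Mapping.single x u) (fa_scal s b) = fa_scal s (fa_mult (Poly_Mapping.single x u) b)"
  apply (subst (1 2) pm_decomp[of b])
  by (simp add: fa_mult_sum_right fa_scal_sum fa_mult_single fa_scal_single mult.assoc mult.left_commute)

lemma fa_mult_scal_right: "fa_mult a (fa_scal s b) = fa_scal s (fa_mult a b)"
  apply (subst (1 2) pm_decomp[of a])
  by (simp add: fa_mult_sum_left fa_scal_sum fa_mult_scal_right1)

lemma fa_word_mult: "fa_mult (fa_word x) (fa_word y) = fa_word (x @ y)"
  by (simp add: fa_word_def fa_mult_single)

lemma fa_mult_one_left[simp]: "fa_mult (fa_word []) a = a"
  by (metis fa_scal_def fa_scal_one fa_word_def)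

lemma fa_mult_one_right[simp]: "fa_mult a (fa_word []) = a"
proof -
  have "fa_mult a (fa_word []) = (\<Sum>x\<in>Poly_Mapping.keys a. fa_mult (Poly_Mapping.single x (Poly_Mapping.lookup a x)) (fa_word []))"
    by (subst (1) pm_decomp[of a]) (simp add: fa_mult_sum_left)
  also have "\<dots> = a" by (subst (3) pm_decomp[of a]) (simp add: fa_word_def fa_mult_single)
  finally show ?thesis .
qed


definition valid :: "nat \<Rightarrow> gen list \<Rightarrow> bool" where
  "valid n w = (\<forall>g\<in>set w. gen_valid n g)"

lemma valid_append[simp]: "valid n (x @ y) = (valid n x \<and> valid n y)"
  by (auto simp: valid_def)
lemma valid_Cons[simp]: "valid n (g # y) = (gen_valid n g \<and> valid n y)"
  by (auto simp: valid_def)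
lemma valid_Nil[simp]: "valid n []" by (simp add: valid_def)

lemma FA_word: "valid n w \<Longrightarrow> fa_word w \<in> FA n"
  by (auto simp: FA_def fa_word_def valid_def)

lemma FA_single: "valid n w \<Longrightarrow> Poly_Mapping.single w s \<in> FA n"
  by (auto simp: FA_def valid_def)

lemma FA_add: "a \<in> FA n \<Longrightarrow> b \<in> FA n \<Longrightarrow> a + b \<in> FA n"
  using keys_add by (fastforce simp: FA_def)

lemma FA_zero: "0 \<in> FA n" by (simp add: FA_def)

lemma FA_sum: "(\<And>i. i \<in> I \<Longrightarrow> f i \<in> FA n) \<Longrightarrow> (\<Sum>i\<in>I. f i) \<in> FA n"
  by (induction I rule: infinite_finite_induct) (auto simp: FA_zero FA_add)

lemma FA_mult: "a \<in> FA n \<Longrightarrow> b \<in> FA n \<Longrightarrow> fa_mult a b \<in> FA n"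
  unfolding fa_mult_def
  by (rule FA_sum, rule FA_sum) (auto simp: FA_def)

lemma FA_iff_valid: "a \<in> FA n \<longleftrightarrow> (\<forall>w\<in>Poly_Mapping.keys a. valid n w)"
  by (simp add: FA_def valid_def)

lemma fa_scal_is_mult: "fa_scal s a = fa_mult (Poly_Mapping.single [] s) a"
  by (simp add: fa_scal_def)

lemma ideal_scal: "a \<in> bH_ideal n \<Longrightarrow> fa_scal s a \<in> bH_ideal n"
  unfolding fa_scal_def by (rule bH_ideal.lmult) (auto intro: FA_single)

lemma ideal_uminus: "a \<in> bH_ideal n \<Longrightarrow> - a \<in> bH_ideal n"
  using ideal_scal[of a n "-1"] by (simp add: fa_scal_minus)

lemma ideal_diff: "a \<in> bH_ideal n \<Longrightarrow> b \<in> bH_ideal n \<Longrightarrow> a - b \<in> bH_ideal n"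
  by (metis bH_ideal.add diff_conv_add_uminus ideal_uminus)

lemma ideal_sum: "(\<And>i. i \<in> I \<Longrightarrow> f i \<in> bH_ideal n) \<Longrightarrow> (\<Sum>i\<in>I. f i) \<in> bH_ideal n"
  by (induction I rule: infinite_finite_induct) (auto intro: bH_ideal.intros)

definition eqv :: "nat \<Rightarrow> fa \<Rightarrow> fa \<Rightarrow> bool" where
  "eqv n a b \<longleftrightarrow> a - b \<in> bH_ideal n"

lemma eqv_refl[simp]: "eqv n a a" by (simp add: eqv_def bH_ideal.zero)
lemma eqv_sym: "eqv n a b \<Longrightarrow> eqv n b a"
  unfolding eqv_def by (drule ideal_uminus) simp
lemma eqv_trans: "eqv n a b \<Longrightarrow> eqv n b c \<Longrightarrow> eqv n a c"
  unfolding eqv_def by (drule (1) bH_ideal.add) simp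
lemma eqv_add: "eqv n a b \<Longrightarrow> eqv n c d \<Longrightarrow> eqv n (a + c) (b + d)"
  unfolding eqv_def by (drule (1) bH_ideal.add) (simp add: algebra_simps)
lemma eqv_diff: "eqv n a b \<Longrightarrow> eqv n c d \<Longrightarrow> eqv n (a - c) (b - d)"
  unfolding eqv_def by (drule (1) ideal_diff) (simp add: algebra_simps)
lemma eqv_scal: "eqv n a b \<Longrightarrow> eqv n (fa_scal s a) (fa_scal s b)"
  unfolding eqv_def by (drule ideal_scal[of _ _ s]) (simp add: fa_scal_def fa_mult_diff_right)
lemma eqv_sum: "(\<And>i. i \<in> I \<Longrightarrow> eqv n (f i) (g i)) \<Longrightarrow> eqv n (\<Sum>i\<in>I. f i) (\<Sum>i\<in>I. g i)"
  unfolding eqv_def by (drule ideal_sum) (simp add: sum_subtractf)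
lemma eqv_lmult: "x \<in> FA n \<Longrightarrow> eqv n a b \<Longrightarrow> eqv n (fa_mult x a) (fa_mult x b)"
  unfolding eqv_def by (drule (1) bH_ideal.lmult) (simp add: fa_mult_diff_right)
lemma eqv_rmult: "x \<in> FA n \<Longrightarrow> eqv n a b \<Longrightarrow> eqv n (fa_mult a x) (fa_mult b x)"
  unfolding eqv_def by (drule (1) bH_ideal.rmult) (simp add: fa_mult_diff_left)

lemma eqv_word_ctx:
  assumes "eqv n (fa_word u) (fa_word v)" "valid n x" "valid n y"
  shows "eqv n (fa_word (x @ u @ y)) (fa_word (x @ v @ y))"
proof -
  have "eqv n (fa_mult (fa_mult (fa_word x) (fa_word u)) (fa_word y)) (fa_mult (fa_mult (fa_word x) (fa_word v)) (fa_word y))"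
    by (intro eqv_rmult eqv_lmult FA_word assms)
  then show ?thesis by (simp add: fa_word_mult)
qed

lemma rel_eqv: "a - b \<in> bH_rels n \<Longrightarrow> eqv n a b"
  by (simp add: eqv_def bH_ideal.rel)

lemma eqv_ee: "1 \<le> i \<Longrightarrow> i < n \<Longrightarrow> eqv n (fa_word [Eg i, Eg i]) (fa_word [Eg i])"
  apply (rule rel_eqv) unfolding bH_rels_def
  apply (rule UnI1, rule UnI1, rule UnI1, rule UnI1, rule UnI1, rule UnI1) by blast
lemma eqv_ee_comm: "1 \<le> i \<Longrightarrow> i < n \<Longrightarrow> 1 \<le> j \<Longrightarrow> j < n \<Longrightarrow> eqv n (fa_word [Eg i, Eg j]) (fa_word [Eg j, Eg i])"
  apply (rule rel_eqv) unfolding bH_rels_def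
  apply (rule UnI1, rule UnI1, rule UnI1, rule UnI1, rule UnI1, rule UnI2) by blast
lemma eqv_braid: "1 \<le> i \<Longrightarrow> Suc i < n \<Longrightarrow> eqv n (fa_word [Zg i, Zg (Suc i), Zg i]) (fa_word [Zg (Suc i), Zg i, Zg (Suc i)])"
  apply (rule rel_eqv) unfolding bH_rels_def
  apply (rule UnI1, rule UnI1, rule UnI1, rule UnI1, rule UnI2)
  apply (rule CollectI, rule exI[of _ i], rule exI[of _ "Suc i"]) by simp
lemma eqv_zz_comm: "1 \<le> i \<Longrightarrow> i < n \<Longrightarrow> 1 \<le> j \<Longrightarrow> j < n \<Longrightarrow> Suc i < j \<Longrightarrow> eqv n (fa_word [Zg i, Zg j]) (fa_word [Zg j, Zg i])"
  apply (rule rel_eqv) unfolding bH_rels_def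
  apply (rule UnI1, rule UnI1, rule UnI1, rule UnI2) by blast
lemma eqv_ez: "1 \<le> i \<Longrightarrow> i < n \<Longrightarrow> eqv n (fa_word [Eg i, Zg i]) (fa_word [Zg i])"
  apply (rule rel_eqv) unfolding bH_rels_def
  apply (rule UnI1, rule UnI1, rule UnI2) by blast
lemma eqv_ez_comm: "1 \<le> i \<Longrightarrow> i < n \<Longrightarrow> 1 \<le> j \<Longrightarrow> j < n \<Longrightarrow> eqv n (fa_word [Eg i, Zg j]) (fa_word [Zg j, Eg i])"
  apply (rule rel_eqv) unfolding bH_rels_def
  apply (rule UnI1, rule UnI2) by blast
lemma eqv_quad: "1 \<le> i \<Longrightarrow> i < n \<Longrightarrow> eqv n (fa_word [Zg i, Zg i]) (fa_word [Eg i] + fa_scal (qL - qLinv) (fa_word [Zg i]))"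
  apply (rule rel_eqv) unfolding bH_rels_def
  apply (rule UnI2) by (auto simp: diff_diff_eq)


abbreviation sw :: "nat \<Rightarrow> nat \<Rightarrow> nat" where "sw i \<equiv> transpose i (Suc i)"

lemma pw_Nil[simp]: "perm_of_word [] = id" by (simp add: perm_of_word_def)
lemma pw_Cons[simp]: "perm_of_word (i # is) = sw i \<circ> perm_of_word is" by (simp add: perm_of_word_def)
lemma pw_append: "perm_of_word (xs @ ys) = perm_of_word xs \<circ> perm_of_word ys"
  by (induction xs) auto
lemma pw_snoc: "perm_of_word (xs @ [i]) = perm_of_word xs \<circ> sw i"
  by (simp add: pw_append)

lemma pw_permutes: "set is \<subseteq> {1..<n} \<Longrightarrow> perm_of_word is permutes {1..n}"
proof (induction "is")
  case Nil then show ?case by (simp add: permutes_id[unfolded id_def])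
next
  case (Cons i "is")
  then have "sw i permutes {1..n}" by (intro permutes_swap_id) auto
  moreover have "perm_of_word is permutes {1..n}" using Cons by auto
  ultimately have "sw i \<circ> perm_of_word is permutes {1..n}" by (rule permutes_compose[rotated])
  then show ?case by (simp only: pw_Cons)
qed

lemma pw_rev_inv: "perm_of_word xs \<circ> perm_of_word (rev xs) = id"
proof (induction xs)
  case Nil then show ?case by simp
next
  case (Cons x xs)
  have "perm_of_word (x # xs) \<circ> perm_of_word (rev (x # xs)) = sw x \<circ> (perm_of_word xs \<circ> perm_of_word (rev xs)) \<circ> sw x"
    by (simp add: pw_snoc o_assoc)
  also have "\<dots> = id" by (simp only: Cons.IH comp_id transpose_comp_involutory)
  finally show ?case .
qed

definition invset :: "nat \<Rightarrow> (nat \<Rightarrow> nat) \<Rightarrow> (nat \<times> nat) set" where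
  "invset n u = {(a,b). a \<in> {1..n} \<and> b \<in> {1..n} \<and> a < b \<and> u b < u a}"

definition invc :: "nat \<Rightarrow> (nat \<Rightarrow> nat) \<Rightarrow> nat" where
  "invc n u = card (invset n u)"

lemma finite_invset[simp]: "finite (invset n u)"
  by (rule finite_subset[of _ "{1..n} \<times> {1..n}"]) (auto simp: invset_def)

lemma invc_id[simp]: "invc n id = 0"
proof -
  have "invset n id = {}" by (auto simp: invset_def)
  then show ?thesis by (simp add: invc_def)
qed

lemma sw_less_iff:
  assumes "a < b" "(a, b) \<noteq> (i, Suc i)"
  shows "sw i a < sw i b"
  using assms by (auto simp: transpose_def)

lemma invset_step:
  assumes "1 \<le> i" "i < n"
  shows "invset n (u \<circ> sw i) - {(i, Suc i)} = (\<lambda>(a,b). (sw i a, sw i b)) ` (invset n u - {(i, Suc i)})"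
proof -
  have inv: "sw i (sw i x) = x" for x by (simp add: transpose_def)
  have range: "sw i a \<in> {1..n} \<longleftrightarrow> a \<in> {1..n}" for a
    using assms by (auto simp: transpose_def)
  have lt: "a < b \<Longrightarrow> (a, b) \<noteq> (i, Suc i) \<Longrightarrow> sw i a < sw i b" for a b by (rule sw_less_iff)
  have pair: "(sw i a, sw i b) = (i, Suc i) \<longleftrightarrow> (a, b) = (Suc i, i)" for a b
    by (auto simp: transpose_def split: if_splits)
  show ?thesis
  proof (rule set_eqI, rule iffI)
    fix x assume x: "x \<in> invset n (u \<circ> sw i) - {(i, Suc i)}"
    obtain a b where ab: "x = (a, b)" by (cases x)
    have "(sw i a, sw i b) \<in> invset n u - {(i, Suc i)}"
      using x lt[of a b] range[of a] range[of b] pair[of a b] by (auto simp: invset_def ab)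
    moreover have "x = (\<lambda>(a,b). (sw i a, sw i b)) (sw i a, sw i b)" by (simp add: ab inv)
    ultimately show "x \<in> (\<lambda>(a,b). (sw i a, sw i b)) ` (invset n u - {(i, Suc i)})" by blast
  next
    fix x assume "x \<in> (\<lambda>(a,b). (sw i a, sw i b)) ` (invset n u - {(i, Suc i)})"
    then obtain a b where ab: "x = (sw i a, sw i b)" and m: "(a, b) \<in> invset n u" "(a,b) \<noteq> (i, Suc i)" by auto
    show "x \<in> invset n (u \<circ> sw i) - {(i, Suc i)}"
      using m lt[of a b] range[of a] range[of b] pair[of a b] by (auto simp: invset_def ab inv)
  qed
qed

lemma invc_step:
  assumes "u permutes {1..n}" "1 \<le> i" "i < n"
  shows "u i < u (Suc i) \<Longrightarrow> invc n (u \<circ> sw i) = Suc (invc n u)"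
    and "u (Suc i) < u i \<Longrightarrow> Suc (invc n (u \<circ> sw i)) = invc n u"
proof -
  have injf: "inj_on (\<lambda>(a,b). (sw i a, sw i b)) X" for X :: "(nat \<times> nat) set"
    by (rule inj_onI) (auto simp: transpose_eq_iff)
  have eqc: "card (invset n (u \<circ> sw i) - {(i, Suc i)}) = card (invset n u - {(i, Suc i)})"
    by (simp add: invset_step[OF assms(2,3)] card_image[OF injf])
  have mem1: "(i, Suc i) \<in> invset n (u \<circ> sw i) \<longleftrightarrow> u i < u (Suc i)"
    using assms by (auto simp: invset_def)
  have mem2: "(i, Suc i) \<in> invset n u \<longleftrightarrow> u (Suc i) < u i"
    using assms by (auto simp: invset_def)
  show "u i < u (Suc i) \<Longrightarrow> invc n (u \<circ> sw i) = Suc (invc n u)"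
  proof -
    assume h: "u i < u (Suc i)"
    then have "(i, Suc i) \<notin> invset n u" using mem2 by auto
    then have "invset n u - {(i, Suc i)} = invset n u" by auto
    moreover have "card (invset n (u \<circ> sw i)) = Suc (card (invset n (u \<circ> sw i) - {(i, Suc i)}))"
      using h mem1 by (intro card.remove) simp_all
    ultimately show ?thesis using eqc by (simp add: invc_def)
  qed
  show "u (Suc i) < u i \<Longrightarrow> Suc (invc n (u \<circ> sw i)) = invc n u"
  proof -
    assume h: "u (Suc i) < u i"
    then have "(i, Suc i) \<notin> invset n (u \<circ> sw i)" using mem1 by auto
    then have "invset n (u \<circ> sw i) - {(i, Suc i)} = invset n (u \<circ> sw i)" by auto
    moreover have "card (invset n u) = Suc (card (invset n u - {(i, Suc i)}))"
      using h mem2 by (intro card.remove) simp_all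
    ultimately show ?thesis using eqc by (simp add: invc_def)
  qed
qed

lemma permutes_neq:
  assumes "u permutes S" "a \<noteq> b" shows "u a \<noteq> u b"
  using assms permutes_inj by (metis injD)

lemma invc_word_le: "set r \<subseteq> {1..<n} \<Longrightarrow> invc n (perm_of_word r) \<le> length r"
proof (induction r rule: rev_induct)
  case Nil then show ?case by (simp only: pw_Nil invc_id)
next
  case (snoc i r)
  then have i: "1 \<le> i" "i < n" and r: "set r \<subseteq> {1..<n}" by auto
  have p: "perm_of_word r permutes {1..n}" using pw_permutes[OF r] .
  have ne: "perm_of_word r i \<noteq> perm_of_word r (Suc i)" by (rule permutes_neq[OF p]) simp
  show ?case
  proof (cases "perm_of_word r i < perm_of_word r (Suc i)")
    case True
    then show ?thesis using invc_step(1)[OF p i] snoc.IH[OF r] unfolding pw_snoc length_append_singleton by linarith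
  next
    case False
    then have "perm_of_word r (Suc i) < perm_of_word r i" using ne by simp
    then show ?thesis using invc_step(2)[OF p i] snoc.IH[OF r] unfolding pw_snoc length_append_singleton by linarith
  qed
qed

lemma descent_exists_aux:
  "a < b \<Longrightarrow> u b < (u a :: nat) \<Longrightarrow> \<exists>i. a \<le> i \<and> i < b \<and> u (Suc i) < u i"
proof (induction "b - a" arbitrary: a)
  case 0 then show ?case by simp
next
  case (Suc k)
  show ?case
  proof (cases "u (Suc a) < u a")
    case True then show ?thesis using Suc.prems by auto
  next
    case False
    have sa: "Suc a < b"
    proof (rule ccontr)
      assume "\<not> Suc a < b"
      then have "b = Suc a" using Suc.prems(1) by simp
      then show False using False Suc.prems(2) by simp
    qed
    have ub: "u b < u (Suc a)" using False Suc.prems(2) by simp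
    have k: "k = b - Suc a" using Suc.hyps(2) by simp
    obtain i where "Suc a \<le> i" "i < b" "u (Suc i) < u i"
      using Suc.hyps(1)[OF k sa ub] by blast
    then show ?thesis by (intro exI[of _ i]) auto
  qed
qed

lemma invc_zero_id:
  assumes "u permutes {1..n}" "invc n u = 0"
  shows "u = id"
proof (rule ccontr)
  assume "u \<noteq> id"
  then have ex: "\<exists>a. u a \<noteq> a" by auto
  define a where "a = (LEAST a. u a \<noteq> a)"
  have ua: "u a \<noteq> a" unfolding a_def by (rule LeastI_ex[OF ex])
  have minim: "\<And>x. x < a \<Longrightarrow> u x = x" unfolding a_def using not_less_Least by blast
  have a_in: "a \<in> {1..n}" using ua permutes_not_in[OF assms(1)] by blast
  have "\<not> u a < a"
  proof
    assume "u a < a"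
    then have "u (u a) = u a" by (rule minim)
    then have "u a = a" using permutes_inj[OF assms(1)] by (metis injD)
    with ua show False by simp
  qed
  then have gt: "a < u a" using ua by simp
  define b where "b = inv u a"
  have ub: "u b = a" unfolding b_def using permutes_inverses(1)[OF assms(1)] by simp
  have "b \<noteq> a" using ub ua by auto
  moreover have "\<not> b < a" using minim ub \<open>b \<noteq> a\<close> by fastforce
  ultimately have ab: "a < b" by simp
  have b_in: "b \<in> {1..n}" using ub a_in permutes_in_image[OF assms(1)] by metis
  have "(a, b) \<in> invset n u" using ab a_in b_in gt ub by (simp add: invset_def)
  then have "invset n u \<noteq> {}" by blast
  then have "invc n u > 0" unfolding invc_def by (simp add: card_gt_0_iff)
  with assms(2) show False by simp
qed

lemma word_exists:
  "u permutes {1..n} \<Longrightarrow> \<exists>r. set r \<subseteq> {1..<n} \<and> perm_of_word r = u \<and> length r = invc n u"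
proof (induction "invc n u" arbitrary: u)
  case 0
  then have "u = id" using invc_zero_id by simp
  then have "set [] \<subseteq> {1..<n} \<and> perm_of_word [] = u \<and> length [] = invc n u"
    using "0.hyps" by (simp only: pw_Nil) simp
  then show ?case by blast
next
  case (Suc k)
  then have "invset n u \<noteq> {}" by (auto simp: invc_def)
  then obtain a b where ab: "a \<in> {1..n}" "b \<in> {1..n}" "a < b" "u b < u a" by (auto simp: invset_def)
  then obtain i where i: "a \<le> i" "i < b" "u (Suc i) < u i" using descent_exists_aux by blast
  have i1: "1 \<le> i" "i < n" using i ab by auto
  define v where "v = u \<circ> sw i"
  have "Suc (invc n v) = invc n u" unfolding v_def by (rule invc_step(2)[OF Suc.prems i1 i(3)])
  then have k: "k = invc n v" using Suc.hyps(2) by simp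
  have vp: "v permutes {1..n}" unfolding v_def using Suc.prems i1 by (intro permutes_compose permutes_swap_id) auto
  obtain r where r: "set r \<subseteq> {1..<n}" "perm_of_word r = v" "length r = invc n v" using Suc.hyps(1)[OF k vp] by blast
  have "perm_of_word (r @ [i]) = u" using r(2) by (simp add: pw_snoc v_def o_assoc fun_eq_iff)
  then show ?case using r i1 k Suc.hyps(2) by (intro exI[of _ "r @ [i]"]) auto
qed

lemma reduced_word_iff:
  assumes "w permutes {1..n}"
  shows "reduced_word n w r \<longleftrightarrow> set r \<subseteq> {1..<n} \<and> perm_of_word r = w \<and> length r = invc n w"
proof
  assume h: "reduced_word n w r"
  obtain r' where r': "set r' \<subseteq> {1..<n}" "perm_of_word r' = w" "length r' = invc n w"
    using word_exists[OF assms] by blast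
  have "length r \<le> length r'" using h r' unfolding reduced_word_def by blast
  moreover have "invc n w \<le> length r" using h invc_word_le unfolding reduced_word_def by blast
  ultimately show "set r \<subseteq> {1..<n} \<and> perm_of_word r = w \<and> length r = invc n w"
    using h r' unfolding reduced_word_def by auto
next
  assume "set r \<subseteq> {1..<n} \<and> perm_of_word r = w \<and> length r = invc n w"
  then show "reduced_word n w r" unfolding reduced_word_def using invc_word_le by fastforce
qed

lemma reduced_word_exists: "w permutes {1..n} \<Longrightarrow> reduced_word n w (SOME r. reduced_word n w r)"
  by (rule someI_ex) (use word_exists reduced_word_iff in blast)

lemma reduced_snoc:
  assumes "reduced_word n w (r @ [i])" "w permutes {1..n}"
  shows "reduced_word n (perm_of_word r) r" "perm_of_word r i < perm_of_word r (Suc i)"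
proof -
  have h: "set (r @ [i]) \<subseteq> {1..<n}" "perm_of_word (r @ [i]) = w" "length (r @ [i]) = invc n w"
    using assms reduced_word_iff by auto
  have r: "set r \<subseteq> {1..<n}" and i: "1 \<le> i" "i < n" using h by auto
  have p: "perm_of_word r permutes {1..n}" using pw_permutes[OF r] .
  have w: "w = perm_of_word r \<circ> sw i" using h by (simp add: pw_snoc)
  have le: "invc n (perm_of_word r) \<le> length r" using invc_word_le[OF r] .
  have ne: "perm_of_word r i \<noteq> perm_of_word r (Suc i)" by (rule permutes_neq[OF p]) simp
  show lt: "perm_of_word r i < perm_of_word r (Suc i)"
  proof (rule ccontr)
    assume "\<not> ?thesis"
    then have "perm_of_word r (Suc i) < perm_of_word r i" using ne by simp
    from invc_step(2)[OF p i this] have "Suc (invc n w) = invc n (perm_of_word r)" by (simp add: w)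
    with le h(3) show False by simp
  qed
  have "invc n w = Suc (invc n (perm_of_word r))" using invc_step(1)[OF p i lt] by (simp add: w)
  then have "length r = invc n (perm_of_word r)" using h(3) by simp
  then show "reduced_word n (perm_of_word r) r" using reduced_word_iff[OF p] r by simp
qed


definition Cf :: "nat \<Rightarrow> nat \<Rightarrow> nat \<Rightarrow> nat" where
  "Cf m p = perm_of_word [p..<m]"

lemma Cf_fun: "p \<le> m \<Longrightarrow> Cf m p = (\<lambda>a. if p \<le> a \<and> a < m then Suc a else if a = m then p else a)"
proof (induction m)
  case 0 then show ?case by (simp add: Cf_def fun_eq_iff)
next
  case (Suc m)
  show ?case
  proof (cases "p = Suc m")
    case True then show ?thesis by (simp add: Cf_def fun_eq_iff)
  next
    case False
    then have pm: "p \<le> m" using Suc.prems by simp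
    have "Cf (Suc m) p = Cf m p \<circ> sw m" unfolding Cf_def using pm by (simp add: pw_snoc)
    then show ?thesis using Suc.IH[OF pm] pm by (auto simp: transpose_def fun_eq_iff)
  qed
qed

lemma Cf_apply: "p \<le> m \<Longrightarrow> Cf m p a = (if p \<le> a \<and> a < m then Suc a else if a = m then p else a)"
  by (simp add: Cf_fun)

lemma Cf_permutes: "1 \<le> p \<Longrightarrow> Cf m p permutes {1..m}"
  unfolding Cf_def by (rule pw_permutes) auto

fun canon :: "nat \<Rightarrow> (nat \<Rightarrow> nat) \<Rightarrow> nat list" where
  "canon 0 v = []"
| "canon (Suc m) v = canon m (v \<circ> Cf (Suc m) (inv v (Suc m))) @ rev [inv v (Suc m)..<Suc m]"

declare canon.simps(2)[simp del]

lemma permutes_shrink: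
  assumes "v permutes {1..Suc m}" "v (Suc m) = Suc m"
  shows "v permutes {1..m}"
  by (rule permutes_superset[OF assms(1)]) (use assms(2) in \<open>auto simp: le_Suc_eq\<close>)

definition ppos :: "nat \<Rightarrow> (nat \<Rightarrow> nat) \<Rightarrow> nat" where "ppos m v = inv v (Suc m)"

context
  fixes m v
  assumes vp: "v permutes {1..Suc m}"
begin


lemma pp_props: "v (ppos m v) = Suc m" "1 \<le> ppos m v" "ppos m v \<le> Suc m"
proof -
  show v: "v (ppos m v) = Suc m" unfolding ppos_def using permutes_inverses(1)[OF vp] .
  have "ppos m v \<in> {1..Suc m}" using v permutes_in_image[OF vp, of "ppos m v"] by auto
  then show "1 \<le> ppos m v" "ppos m v \<le> Suc m" by auto
qed

lemma vprime_permutes: "v \<circ> Cf (Suc m) (ppos m v) permutes {1..m}"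
proof (rule permutes_shrink)
  show "v \<circ> Cf (Suc m) (ppos m v) permutes {1..Suc m}"
    using Cf_permutes[OF pp_props(2)] vp by (rule permutes_compose)
  show "(v \<circ> Cf (Suc m) (ppos m v)) (Suc m) = Suc m"
    using pp_props by (simp add: Cf_apply)
qed

end

lemma canon_Suc: "v permutes {1..Suc m} \<Longrightarrow> canon (Suc m) v = canon m (v \<circ> Cf (Suc m) (ppos m v)) @ rev [ppos m v..<Suc m]"
  by (simp only: ppos_def canon.simps(2))

lemma canon_perm: "v permutes {1..m} \<Longrightarrow> perm_of_word (canon m v) = v"
proof (induction m arbitrary: v)
  case 0
  then have "v = id" by (simp add: permutes_empty)
  then show ?case by simp
next
  case (Suc m)
  have "perm_of_word (canon (Suc m) v) = perm_of_word (canon m (v \<circ> Cf (Suc m) (ppos m v))) \<circ> perm_of_word (rev [ppos m v..<Suc m])"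
    by (simp only: canon_Suc[OF Suc.prems] pw_append)
  also have "\<dots> = (v \<circ> Cf (Suc m) (ppos m v)) \<circ> perm_of_word (rev [ppos m v..<Suc m])"
    by (simp only: Suc.IH[OF vprime_permutes[OF Suc.prems]])
  also have "\<dots> = v" unfolding Cf_def by (simp only: comp_assoc pw_rev_inv comp_id)
  finally show ?case .
qed

lemma canon_set: "v permutes {1..m} \<Longrightarrow> set (canon m v) \<subseteq> {1..<m}"
proof (induction m arbitrary: v)
  case 0 then show ?case by simp
next
  case (Suc m)
  have "set (canon m (v \<circ> Cf (Suc m) (ppos m v))) \<subseteq> {1..<m}"
    by (rule Suc.IH[OF vprime_permutes[OF Suc.prems]])
  then show ?case using canon_Suc[OF Suc.prems] pp_props(2)[OF Suc.prems] by auto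
qed

lemma canon_id: "canon m id = []"
proof (induction m)
  case 0 then show ?case by simp
next
  case (Suc m)
  have "Cf (Suc m) (Suc m) = id" by (simp add: Cf_def)
  moreover have "inv id (Suc m) = Suc m" by simp
  ultimately show ?case using Suc by (simp add: canon.simps(2))
qed

inductive beq :: "nat \<Rightarrow> nat list \<Rightarrow> nat list \<Rightarrow> bool" for n where
  brefl: "beq n r r"
| bsym: "beq n r r' \<Longrightarrow> beq n r' r"
| btrans: "beq n r r' \<Longrightarrow> beq n r' r'' \<Longrightarrow> beq n r r''"
| bcomm: "set xs \<subseteq> {1..<n} \<Longrightarrow> set ys \<subseteq> {1..<n} \<Longrightarrow> 1 \<le> i \<Longrightarrow> j < n \<Longrightarrow> Suc i < j \<Longrightarrow>
    beq n (xs @ [i, j] @ ys) (xs @ [j, i] @ ys)"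
| bbraid: "set xs \<subseteq> {1..<n} \<Longrightarrow> set ys \<subseteq> {1..<n} \<Longrightarrow> 1 \<le> i \<Longrightarrow> Suc i < n \<Longrightarrow>
    beq n (xs @ [i, Suc i, i] @ ys) (xs @ [Suc i, i, Suc i] @ ys)"

lemma beq_ctx:
  assumes "beq n r r'" "set xs \<subseteq> {1..<n}" "set ys \<subseteq> {1..<n}"
  shows "beq n (xs @ r @ ys) (xs @ r' @ ys)"
  using assms(1)
proof (induction rule: beq.induct)
  case (brefl r) then show ?case by (rule beq.brefl)
next
  case (bsym r r') show ?case using bsym.IH by (rule beq.bsym)
next
  case (btrans r r' r'') show ?case using btrans.IH by (rule beq.btrans)
next
  case (bcomm xs' ys' i j)
  have "beq n ((xs @ xs') @ [i, j] @ (ys' @ ys)) ((xs @ xs') @ [j, i] @ (ys' @ ys))"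
    by (rule beq.bcomm) (use bcomm assms in auto)
  then show ?case by simp
next
  case (bbraid xs' ys' i)
  have "beq n ((xs @ xs') @ [i, Suc i, i] @ (ys' @ ys)) ((xs @ xs') @ [Suc i, i, Suc i] @ (ys' @ ys))"
    by (rule beq.bbraid) (use bbraid assms in auto)
  then show ?case by simp
qed

lemma beq_set: "beq n r r' \<Longrightarrow> set r = set r'"
  by (induction rule: beq.induct) auto

lemma comm_past:
  assumes "set xs \<subseteq> {1..<n}" "set ys \<subseteq> {1..<n}" "set zs \<subseteq> {1..<n}" "1 \<le> i" "i < n"
    "\<forall>y\<in>set ys. Suc y < i \<or> Suc i < y"
  shows "beq n (xs @ ys @ [i] @ zs) (xs @ [i] @ ys @ zs)"
  using assms
proof (induction ys arbitrary: xs)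
  case Nil then show ?case by (simp add: beq.brefl)
next
  case (Cons y ys)
  have IH: "beq n ((xs @ [y]) @ ys @ [i] @ zs) ((xs @ [y]) @ [i] @ ys @ zs)"
    by (rule Cons.IH) (use Cons.prems in auto)
  have sw: "beq n (xs @ [y, i] @ (ys @ zs)) (xs @ [i, y] @ (ys @ zs))"
  proof (cases "Suc y < i")
    case True
    show ?thesis by (rule beq.bcomm) (use Cons.prems True in auto)
  next
    case False
    then have "Suc i < y" using Cons.prems by auto
    show ?thesis by (rule beq.bsym, rule beq.bcomm) (use Cons.prems \<open>Suc i < y\<close> in auto)
  qed
  show ?case using beq.btrans[OF IH] sw by simp
qed

lemma upt_split3: "p \<le> k \<Longrightarrow> Suc k < M \<Longrightarrow> [p..<M] = [p..<k] @ [k, Suc k] @ [Suc (Suc k)..<M]"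
proof -
  assume a: "p \<le> k" "Suc k < M"
  have "[p..<M] = [p..<k] @ [k..<M]" using a upt_add_eq_append[of p k "M - k"] by simp
  also have "[k..<M] = k # Suc k # [Suc (Suc k)..<M]" using a by (simp add: upt_conv_Cons)
  finally show ?thesis by simp
qed

lemma braid_past:
  assumes "1 \<le> p" "p \<le> k" "Suc k < M" "M \<le> n"
  shows "beq n (rev [p..<M] @ [Suc k]) ([k] @ rev [p..<M])"
proof -
  define A where "A = rev [Suc (Suc k)..<M]"
  define B where "B = rev [p..<k]"
  have rv: "rev [p..<M] = A @ [Suc k, k] @ B" unfolding A_def B_def using upt_split3[OF assms(2,3)] by simp
  have sA: "set A \<subseteq> {1..<n}" "\<forall>y\<in>set A. Suc k < y" unfolding A_def using assms by auto
  have sB: "set B \<subseteq> {1..<n}" "\<forall>y\<in>set B. Suc y < Suc k" unfolding B_def using assms by auto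
  have s1: "beq n ((A @ [Suc k, k]) @ B @ [Suc k] @ []) ((A @ [Suc k, k]) @ [Suc k] @ B @ [])"
    by (rule comm_past) (use sA sB assms in auto)
  have s1': "beq n (A @ [Suc k, k] @ B @ [Suc k]) (A @ [Suc k, k, Suc k] @ B)" using s1 by simp
  have s2: "beq n (A @ [Suc k, k, Suc k] @ B) (A @ [k, Suc k, k] @ B)"
    by (rule beq.bsym, rule beq.bbraid) (use sA sB assms in auto)
  have s3: "beq n ([] @ A @ [k] @ ([Suc k, k] @ B)) ([] @ [k] @ A @ ([Suc k, k] @ B))"
    by (rule comm_past) (use sA sB assms in auto)
  have "beq n (rev [p..<M] @ [Suc k]) (A @ [k, Suc k, k] @ B)"
    using beq.btrans[OF s1' s2] rv by simp
  then show ?thesis using beq.btrans[OF _ s3] rv by simp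
qed

lemma La: "Suc i < p \<Longrightarrow> p \<le> M \<Longrightarrow> sw i (Cf M p a) = Cf M p (sw i a)"
  by (simp add: Cf_apply transpose_def)
lemma Lb: "Suc i \<le> M \<Longrightarrow> sw i (Cf M i a) = Cf M (Suc i) a"
  by (auto simp add: Cf_apply transpose_def)
lemma Ld: "p \<le> k \<Longrightarrow> Suc k < M \<Longrightarrow> sw (Suc k) (Cf M p a) = Cf M p (sw k a)"
  by (simp add: Cf_apply transpose_def)

lemma pp_comp_sw:
  assumes "v permutes {1..Suc m}" "1 \<le> i" "i < Suc m"
  shows "ppos m (v \<circ> sw i) = sw i (ppos m v)"
proof -
  have up: "v \<circ> sw i permutes {1..Suc m}" using assms by (intro permutes_compose permutes_swap_id) auto
  have "(v \<circ> sw i) (sw i (ppos m v)) = Suc m" using pp_props(1)[OF assms(1)] by simp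
  then show ?thesis unfolding ppos_def using permutes_inv_eq[OF up] by blast
qed

lemma Kc:
  "m \<le> n \<Longrightarrow> v permutes {1..m} \<Longrightarrow> 1 \<le> i \<Longrightarrow> i < m \<Longrightarrow> v i < v (Suc i) \<Longrightarrow>
   beq n (canon m v @ [i]) (canon m (v \<circ> sw i))"
proof (induction m arbitrary: v i)
  case 0 then show ?case by simp
next
  case (Suc m)
  note vp = Suc.prems(2)
  define p where "p = ppos m v"
  define v' where "v' = v \<circ> Cf (Suc m) p"
  have p: "v p = Suc m" "1 \<le> p" "p \<le> Suc m" using pp_props[OF vp] by (auto simp: p_def)
  have v'p: "v' permutes {1..m}" unfolding v'_def p_def by (rule vprime_permutes[OF vp])
  have uvp: "v \<circ> sw i permutes {1..Suc m}" using Suc.prems by (intro permutes_compose permutes_swap_id) auto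
  have cv: "canon (Suc m) v = canon m v' @ rev [p..<Suc m]" unfolding v'_def p_def by (rule canon_Suc[OF vp])
  have cu: "canon (Suc m) (v \<circ> sw i) = canon m ((v \<circ> sw i) \<circ> Cf (Suc m) (sw i p)) @ rev [sw i p..<Suc m]"
    using canon_Suc[OF uvp] pp_comp_sw[OF vp Suc.prems(3,4)] by (simp add: p_def)
  have setv': "set (canon m v') \<subseteq> {1..<n}" using canon_set[OF v'p] Suc.prems(1) by auto
  have setr: "set (rev [p..<Suc m]) \<subseteq> {1..<n}" using p Suc.prems(1) by auto
  consider "Suc i < p" | "Suc i = p" | "i = p" | "p < i" by linarith
  then show ?case
  proof cases
    case 1
    have swp: "sw i p = p" using 1 by (simp add: transpose_def)
    have comp: "(v \<circ> sw i) \<circ> Cf (Suc m) p = v' \<circ> sw i"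
      unfolding v'_def using 1 p by (simp add: fun_eq_iff La)
    have v'i: "v' i = v i" "v' (Suc i) = v (Suc i)" unfolding v'_def using 1 p by (auto simp: Cf_apply)
    have IH: "beq n (canon m v' @ [i]) (canon m (v' \<circ> sw i))"
      by (rule Suc.IH) (use Suc.prems 1 p v'p v'i in auto)
    have s1: "beq n (canon m v' @ rev [p..<Suc m] @ [i] @ []) (canon m v' @ [i] @ rev [p..<Suc m] @ [])"
      by (rule comm_past) (use setv' setr Suc.prems 1 in auto)
    have s2: "beq n ([] @ (canon m v' @ [i]) @ rev [p..<Suc m]) ([] @ canon m (v' \<circ> sw i) @ rev [p..<Suc m])"
      by (rule beq_ctx[OF IH]) (use setr in auto)
    have s1': "beq n (canon m v' @ rev [p..<Suc m] @ [i]) (canon m v' @ [i] @ rev [p..<Suc m])"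
      using s1 by (simp only: append_Nil2)
    have s2': "beq n (canon m v' @ [i] @ rev [p..<Suc m]) (canon m (v' \<circ> sw i) @ rev [p..<Suc m])"
      using s2 by (simp only: append_Nil append_assoc)
    have e2: "canon (Suc m) (v \<circ> sw i) = canon m (v' \<circ> sw i) @ rev [p..<Suc m]"
      using cu by (simp only: swp comp)
    show ?thesis unfolding cv e2 using beq.btrans[OF s1' s2'] by (simp only: append_assoc)
  next
    case 2
    have swp: "sw i p = i" using 2 by (simp add: transpose_def)
    have comp: "(v \<circ> sw i) \<circ> Cf (Suc m) i = v'"
    proof -
      have "Suc i \<le> Suc m" using 2 p by simp
      then show ?thesis unfolding v'_def 2[symmetric] by (simp add: fun_eq_iff Lb)
    qed
    have "[i..<Suc m] = i # [Suc i..<Suc m]" using Suc.prems(4) by (simp add: upt_conv_Cons)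
    then have "rev [i..<Suc m] = rev [p..<Suc m] @ [i]" using 2 by simp
    then have "canon (Suc m) (v \<circ> sw i) = canon (Suc m) v @ [i]"
      using cu cv by (simp only: swp comp append_assoc)
    then show ?thesis by (simp only: beq.brefl)
  next
    case 3
    have "Suc i \<in> {1..Suc m}" using Suc.prems by auto
    then have "v (Suc i) \<in> {1..Suc m}" using permutes_in_image[OF vp] by blast
    moreover have "v (Suc i) \<noteq> v i" by (rule permutes_neq[OF vp]) simp
    ultimately have "v (Suc i) < v i" using 3 p by auto
    with Suc.prems(5) show ?thesis by simp
  next
    case 4
    then obtain k where k: "i = Suc k" "p \<le> k" by (cases i) auto
    have swp: "sw i p = p" using 4 by (simp add: transpose_def)
    have comp: "(v \<circ> sw i) \<circ> Cf (Suc m) p = v' \<circ> sw k"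
      unfolding v'_def using 4 p k Suc.prems(4) by (simp add: fun_eq_iff Ld)
    have v'k: "v' k = v i" "v' (Suc k) = v (Suc i)" unfolding v'_def using 4 p k Suc.prems(4) by (auto simp: Cf_apply)
    have IH: "beq n (canon m v' @ [k]) (canon m (v' \<circ> sw k))"
      by (rule Suc.IH) (use Suc.prems k p v'p v'k in auto)
    have b: "beq n (rev [p..<Suc m] @ [Suc k]) ([k] @ rev [p..<Suc m])"
      by (rule braid_past) (use p k Suc.prems in auto)
    have s1: "beq n (canon m v' @ (rev [p..<Suc m] @ [Suc k]) @ []) (canon m v' @ ([k] @ rev [p..<Suc m]) @ [])"
      by (rule beq_ctx[OF b]) (use setv' in auto)
    have s2: "beq n ([] @ (canon m v' @ [k]) @ rev [p..<Suc m]) ([] @ canon m (v' \<circ> sw k) @ rev [p..<Suc m])"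
      by (rule beq_ctx[OF IH]) (use setr in auto)
    have s1': "beq n (canon m v' @ rev [p..<Suc m] @ [Suc k]) (canon m v' @ [k] @ rev [p..<Suc m])"
      using s1 by (simp only: append_Nil2 append_assoc)
    have s2': "beq n (canon m v' @ [k] @ rev [p..<Suc m]) (canon m (v' \<circ> sw k) @ rev [p..<Suc m])"
      using s2 by (simp only: append_Nil append_assoc)
    have e2: "canon (Suc m) (v \<circ> sw i) = canon m (v' \<circ> sw k) @ rev [p..<Suc m]"
      using cu by (simp only: swp comp)
    show ?thesis unfolding cv e2 using beq.btrans[OF s1' s2'] by (simp only: append_assoc k(1))
  qed
qed

lemma matsumoto:
  "w permutes {1..n} \<Longrightarrow> reduced_word n w r \<Longrightarrow> beq n r (canon n w)"
proof (induction r arbitrary: w rule: rev_induct)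
  case Nil
  then have "w = id" unfolding reduced_word_def by simp
  then show ?case by (simp only: canon_id) (rule beq.brefl)
next
  case (snoc i r)
  define u where "u = perm_of_word r"
  have red: "reduced_word n u r" and lt: "u i < u (Suc i)" using reduced_snoc[OF snoc.prems(2,1)] by (auto simp: u_def)
  have sets: "set (r @ [i]) \<subseteq> {1..<n}" and w: "perm_of_word (r @ [i]) = w"
    using snoc.prems unfolding reduced_word_def by auto
  have up: "u permutes {1..n}" unfolding u_def using sets by (intro pw_permutes) auto
  have IH: "beq n r (canon n u)" by (rule snoc.IH[OF up red])
  have s1: "beq n ([] @ r @ [i]) ([] @ canon n u @ [i])"
    by (rule beq_ctx[OF IH]) (use sets in auto)
  have s2: "beq n (canon n u @ [i]) (canon n (u \<circ> sw i))"
    by (rule Kc) (use up sets lt in auto)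
  have weq: "w = u \<circ> sw i" using w by (simp only: u_def pw_snoc)
  have s1': "beq n (r @ [i]) (canon n u @ [i])" using s1 by (simp only: append_Nil)
  show ?case using beq.btrans[OF s1' s2] by (simp only: weq)
qed

definition conn :: "nat set \<Rightarrow> nat \<Rightarrow> nat \<Rightarrow> bool" where
  "conn J a b = (\<forall>k. min a b \<le> k \<and> k < max a b \<longrightarrow> k \<in> J)"

lemma conn_refl[simp]: "conn J a a" by (auto simp: conn_def)

lemma conn_trans: "conn J a b \<Longrightarrow> conn J b c \<Longrightarrow> conn J a c"
proof -
  assume h1: "conn J a b" and h2: "conn J b c"
  show "conn J a c" unfolding conn_def
  proof (intro allI impI)
    fix k assume k: "min a c \<le> k \<and> k < max a c"
    have "(min a b \<le> k \<and> k < max a b) \<or> (min b c \<le> k \<and> k < max b c)"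
      using k by (cases "a \<le> b"; cases "b \<le> c"; cases "a \<le> c") (auto simp: min_def max_def)
    then show "k \<in> J" using h1 h2 unfolding conn_def by blast
  qed
qed

lemma canon_letters:
  "v permutes {1..m} \<Longrightarrow> (\<forall>a. conn J a (v a)) \<Longrightarrow> set (canon m v) \<subseteq> J"
proof (induction m arbitrary: v)
  case 0 then show ?case by simp
next
  case (Suc m)
  note vp = Suc.prems(1)
  define p where "p = ppos m v"
  define v' where "v' = v \<circ> Cf (Suc m) p"
  have p: "v p = Suc m" "1 \<le> p" "p \<le> Suc m" using pp_props[OF vp] by (auto simp: p_def)
  have v'p: "v' permutes {1..m}" unfolding v'_def p_def by (rule vprime_permutes[OF vp])
  have cp: "conn J p (Suc m)" using Suc.prems(2) p by metis
  then have rng: "{p..<Suc m} \<subseteq> J" using p unfolding conn_def by auto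
  have "conn J a (v' a)" for a
  proof (cases "p \<le> a \<and> a < Suc m")
    case True
    then have "v' a = v (Suc a)" unfolding v'_def using p by (simp add: Cf_apply)
    moreover have "conn J a (Suc a)" using True rng unfolding conn_def by auto
    ultimately show ?thesis using Suc.prems(2) conn_trans by metis
  next
    case False
    show ?thesis
    proof (cases "a = Suc m")
      case True
      then have "v' a = Suc m" unfolding v'_def using p False by (simp add: Cf_apply)
      then show ?thesis using True by simp
    next
      case False2: False
      then have "v' a = v a" unfolding v'_def using p False False2 by (auto simp: Cf_apply)
      then show ?thesis using Suc.prems(2) by metis
    qed
  qed
  then have "set (canon m v') \<subseteq> J" using Suc.IH[OF v'p] by blast
  then show ?case using canon_Suc[OF vp] rng by (auto simp: v'_def p_def)
qed

lemma reduced_letters: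
  "w permutes {1..n} \<Longrightarrow> (\<forall>a. conn J a (w a)) \<Longrightarrow> reduced_word n w r \<Longrightarrow> set r \<subseteq> J"
  using matsumoto beq_set canon_letters by metis


definition Jof :: "nat set set \<Rightarrow> nat set" where
  "Jof P = {i. \<exists>B\<in>P. i \<in> B \<and> Suc i \<in> B}"

definition crel :: "nat \<Rightarrow> nat set \<Rightarrow> (nat \<times> nat) set" where
  "crel n J = {(a,b). a \<in> {1..n} \<and> b \<in> {1..n} \<and> conn J a b}"

lemma conn_sym: "conn J a b = conn J b a"
  by (simp add: conn_def min.commute max.commute)

lemma equiv_crel: "equiv {1..n} (crel n J)"
  unfolding equiv_def refl_on_def sym_def trans_def crel_def
  using conn_sym conn_trans by auto

lemma E_word_eq: "E_word n P = map Eg (filter (\<lambda>i. i \<in> Jof P) [1..<n])"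
proof -
  have "\<And>xs. [Eg i. i \<leftarrow> xs, \<exists>B\<in>P. i \<in> B \<and> Suc i \<in> B] = map Eg (filter (\<lambda>i. i \<in> Jof P) xs)"
    subgoal for xs by (induction xs) (auto simp: Jof_def)
    done
  then show ?thesis by (simp add: E_word_def)
qed

context
  fixes n P
  assumes P: "P \<in> LP n"
begin

lemma LP_part: "partition_on {1..n} P" using P by (simp add: LP_def)
lemma LP_int: "B \<in> P \<Longrightarrow> \<exists>x y. B = {x..y}" using P by (simp add: LP_def)

lemma LP_same: "B \<in> P \<Longrightarrow> B' \<in> P \<Longrightarrow> k \<in> B \<Longrightarrow> k \<in> B' \<Longrightarrow> B = B'"
  using partition_onD2[OF LP_part] unfolding disjoint_def by auto

lemma Jof_sub: "Jof P \<subseteq> {1..<n}"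
proof
  fix i assume "i \<in> Jof P"
  then obtain B where "B \<in> P" "i \<in> B" "Suc i \<in> B" by (auto simp: Jof_def)
  then have "i \<in> {1..n}" "Suc i \<in> {1..n}" using partition_onD1[OF LP_part] by auto
  then show "i \<in> {1..<n}" by auto
qed

lemma block_conn: "B \<in> P \<Longrightarrow> a \<in> B \<Longrightarrow> b \<in> B \<Longrightarrow> conn (Jof P) a b"
proof -
  assume B: "B \<in> P" "a \<in> B" "b \<in> B"
  obtain x y where xy: "B = {x..y}" using LP_int[OF B(1)] by blast
  show ?thesis unfolding conn_def Jof_def
  proof (intro allI impI)
    fix k assume "min a b \<le> k \<and> k < max a b"
    then have "k \<in> B" "Suc k \<in> B" using B(2,3) xy by auto
    then show "k \<in> {i. \<exists>B\<in>P. i \<in> B \<and> Suc i \<in> B}" using B(1) by blast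
  qed
qed

lemma step_block: "B \<in> P \<Longrightarrow> k \<in> Jof P \<Longrightarrow> (k \<in> B \<longleftrightarrow> Suc k \<in> B)"
proof -
  assume B: "B \<in> P" and k: "k \<in> Jof P"
  then obtain B' where B': "B' \<in> P" "k \<in> B'" "Suc k \<in> B'" by (auto simp: Jof_def)
  show ?thesis using LP_same[OF B(1) B'(1)] B' by blast
qed

lemma conn_block_up: "B \<in> P \<Longrightarrow> a \<in> B \<Longrightarrow> conn (Jof P) a (a + d) \<Longrightarrow> a + d \<in> B"
proof (induction d)
  case 0 then show ?case by simp
next
  case (Suc d)
  have c: "conn (Jof P) a (a + d)" using Suc.prems(3) unfolding conn_def by auto
  have "a + d \<in> Jof P" using Suc.prems(3) unfolding conn_def by auto
  then show ?case using Suc.IH[OF Suc.prems(1,2) c] step_block[OF Suc.prems(1)] by simp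
qed

lemma conn_block_down: "B \<in> P \<Longrightarrow> b + d \<in> B \<Longrightarrow> conn (Jof P) b (b + d) \<Longrightarrow> b \<in> B"
proof (induction d arbitrary: b)
  case 0 then show ?case by simp
next
  case (Suc d)
  have c: "conn (Jof P) (Suc b) (Suc b + d)" using Suc.prems(3) unfolding conn_def by auto
  have "Suc b \<in> B" using Suc.IH[OF Suc.prems(1) _ c] Suc.prems(2) by simp
  moreover have "b \<in> Jof P" using Suc.prems(3) unfolding conn_def by auto
  ultimately show ?case using step_block[OF Suc.prems(1)] by simp
qed

lemma conn_block: "B \<in> P \<Longrightarrow> a \<in> B \<Longrightarrow> conn (Jof P) a b \<Longrightarrow> b \<in> B"
proof -
  assume h: "B \<in> P" "a \<in> B" "conn (Jof P) a b"
  show "b \<in> B"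
  proof (cases "a \<le> b")
    case True
    then obtain d where "b = a + d" using le_Suc_ex by blast
    then show ?thesis using conn_block_up[OF h(1,2)] h(3) by simp
  next
    case False
    then obtain d where d: "a = b + d" by (metis le_Suc_ex nat_le_linear)
    show ?thesis using conn_block_down[OF h(1)] h(2,3) d conn_sym by metis
  qed
qed

lemma LP_quotient: "P = {1..n} // crel n (Jof P)"
proof -
  have "{(x, y). \<exists>p\<in>P. x \<in> p \<and> y \<in> p} = crel n (Jof P)"
  proof (rule set_eqI, rule iffI)
    fix z assume "z \<in> {(x, y). \<exists>p\<in>P. x \<in> p \<and> y \<in> p}"
    then obtain x y B where z: "z = (x,y)" "B \<in> P" "x \<in> B" "y \<in> B" by auto
    then have "x \<in> {1..n}" "y \<in> {1..n}" using partition_onD1[OF LP_part] by auto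
    then show "z \<in> crel n (Jof P)" using block_conn[OF z(2-4)] z(1) by (simp add: crel_def)
  next
    fix z assume "z \<in> crel n (Jof P)"
    then obtain x y where z: "z = (x,y)" "x \<in> {1..n}" "y \<in> {1..n}" "conn (Jof P) x y" by (auto simp: crel_def)
    then have "x \<in> \<Union>P" using partition_onD1[OF LP_part] by auto
    then obtain B where "B \<in> P" "x \<in> B" by blast
    then show "z \<in> {(x, y). \<exists>p\<in>P. x \<in> p \<and> y \<in> p}" using conn_block z by auto
  qed
  then show ?thesis using partition_on_eq_quotient[OF LP_part] by simp
qed

lemma young_iff: "w \<in> young n P \<longleftrightarrow> w permutes {1..n} \<and> (\<forall>a. conn (Jof P) a (w a))"
proof
  assume w: "w \<in> young n P"
  then have wp: "w permutes {1..n}" by (simp add: young_def)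
  have "conn (Jof P) a (w a)" for a
  proof (cases "a \<in> {1..n}")
    case True
    then have "a \<in> \<Union>P" using partition_onD1[OF LP_part] by auto
    then obtain B where B: "B \<in> P" "a \<in> B" by blast
    then have "w a \<in> B" using w by (auto simp: young_def)
    then show ?thesis using block_conn B by blast
  next
    case False then show ?thesis using permutes_not_in[OF wp] by simp
  qed
  then show "w permutes {1..n} \<and> (\<forall>a. conn (Jof P) a (w a))" using wp by blast
next
  assume h: "w permutes {1..n} \<and> (\<forall>a. conn (Jof P) a (w a))"
  have "w ` B = B" if B: "B \<in> P" for B
  proof (rule endo_inj_surj)
    have "B \<subseteq> {1..n}" using B partition_onD1[OF LP_part] by auto
    then show "finite B" by (rule finite_subset) simp
    show "w ` B \<subseteq> B" using conn_block[OF B] h by blast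
    show "inj_on w B" using permutes_inj_on h by blast
  qed
  then show "w \<in> young n P" using h by (simp add: young_def)
qed

end

lemma Jof_inj: "P \<in> LP n \<Longrightarrow> P' \<in> LP n \<Longrightarrow> Jof P = Jof P' \<Longrightarrow> P = P'"
  using LP_quotient by metis

lemma class_interval:
  assumes J: "J \<subseteq> {1..<n}" and a: "a \<in> {1..n}"
  shows "\<exists>x y. crel n J `` {a} = {x..y}"
proof -
  define X where "X = crel n J `` {a}"
  have aX: "a \<in> X" using a by (simp add: X_def crel_def)
  have fin: "finite X" by (rule finite_subset[of _ "{1..n}"]) (auto simp: X_def crel_def)
  have ne: "X \<noteq> {}" using aX by auto
  have X: "X = {b. b \<in> {1..n} \<and> conn J a b}" using a by (auto simp: X_def crel_def)
  have "X = {Min X..Max X}"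
  proof
    show "X \<subseteq> {Min X..Max X}" using fin by auto
    show "{Min X..Max X} \<subseteq> X"
    proof
      fix x assume x: "x \<in> {Min X..Max X}"
      have mi: "Min X \<in> X" "Max X \<in> X" using fin ne by auto
      have am: "Min X \<le> a" "a \<le> Max X" using fin aX by auto
      have c1: "conn J a (Min X)" "conn J a (Max X)" using mi X by auto
      have "conn J a x" unfolding conn_def
      proof (intro allI impI)
        fix k assume "min a x \<le> k \<and> k < max a x"
        then have "(min a (Min X) \<le> k \<and> k < max a (Min X)) \<or> (min a (Max X) \<le> k \<and> k < max a (Max X))"
          using x am by auto
        then show "k \<in> J" using c1 unfolding conn_def by blast
      qed
      moreover have "x \<in> {1..n}" using x mi X by auto
      ultimately show "x \<in> X" using X by auto
    qed
  qed
  then show ?thesis unfolding X_def by blast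
qed

lemma LP_of_J:
  assumes J: "J \<subseteq> {1..<n}"
  shows "{1..n} // crel n J \<in> LP n" "Jof ({1..n} // crel n J) = J"
proof -
  show "{1..n} // crel n J \<in> LP n"
    unfolding LP_def using partition_on_quotient[OF equiv_crel] class_interval[OF J]
    by (auto elim!: quotientE)
  show "Jof ({1..n} // crel n J) = J"
  proof
    show "Jof ({1..n} // crel n J) \<subseteq> J"
    proof
      fix i assume "i \<in> Jof ({1..n} // crel n J)"
      then obtain X where X: "X \<in> {1..n} // crel n J" "i \<in> X" "Suc i \<in> X" by (auto simp: Jof_def)
      then have "(i, Suc i) \<in> crel n J" using in_quotient_imp_in_rel[OF equiv_crel] by blast
      then show "i \<in> J" by (auto simp: crel_def conn_def)
    qed
    show "J \<subseteq> Jof ({1..n} // crel n J)"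
    proof
      fix i assume i: "i \<in> J"
      then have i1: "i \<in> {1..n}" "Suc i \<in> {1..n}" using J by auto
      have "conn J i (Suc i)" unfolding conn_def
      proof (intro allI impI)
        fix k assume "min i (Suc i) \<le> k \<and> k < max i (Suc i)"
        then have "k = i" by simp
        then show "k \<in> J" using i by simp
      qed
      then have "i \<in> crel n J `` {i}" "Suc i \<in> crel n J `` {i}" using i1 by (auto simp: crel_def)
      moreover have "crel n J `` {i} \<in> {1..n} // crel n J" using i1(1) by (rule quotientI)
      ultimately show "i \<in> Jof ({1..n} // crel n J)" unfolding Jof_def by blast
    qed
  qed
qed


type_synonym vec = "nat set \<times> (nat \<Rightarrow> nat) \<Rightarrow> laurent"

definition tq :: laurent where "tq = qL - qLinv"

fun Rg :: "gen \<Rightarrow> vec \<Rightarrow> vec" where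
  "Rg (Eg i) f = (\<lambda>(J,v). if i \<in> J \<and> inj v then f (J,v) else 0)"
| "Rg (Zg i) f = (\<lambda>(J,v). if i \<in> J \<and> inj v then f (J, v \<circ> sw i) + (if v (Suc i) < v i then tq * f (J,v) else 0) else 0)"

lemma inj_sw: "inj v \<Longrightarrow> inj (v \<circ> sw i)"
  by (simp add: inj_compose)

lemma RE: "Rg (Eg i) f (J,v) = (if i \<in> J \<and> inj v then f (J,v) else 0)" by simp
lemma RZ: "Rg (Zg i) f (J,v) = (if i \<in> J \<and> inj v then f (J, v \<circ> sw i) + (if v (Suc i) < v i then tq * f (J,v) else 0) else 0)" by simp

declare Rg.simps[simp del]

lemma R_ee: "Rg (Eg i) (Rg (Eg i) f) = Rg (Eg i) f"
  by (rule ext, case_tac x) (simp add: RE)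

lemma R_ee_comm: "Rg (Eg j) (Rg (Eg i) f) = Rg (Eg i) (Rg (Eg j) f)"
  by (rule ext, case_tac x) (simp add: RE)

lemma R_ez: "Rg (Zg i) (Rg (Eg i) f) = Rg (Zg i) f"
  by (rule ext, case_tac x) (simp add: RE RZ inj_sw)

lemma R_ez_comm: "Rg (Zg j) (Rg (Eg i) f) = Rg (Eg i) (Rg (Zg j) f)"
  by (rule ext, case_tac x) (auto simp add: RE RZ inj_sw)

lemma R_quad: "Rg (Zg i) (Rg (Zg i) f) = (\<lambda>p. Rg (Eg i) f p + tq * Rg (Zg i) f p)"
proof (rule ext)
  fix p :: "nat set \<times> (nat \<Rightarrow> nat)"
  obtain J v where p: "p = (J, v)" by (cases p)
  show "Rg (Zg i) (Rg (Zg i) f) p = Rg (Eg i) f p + tq * Rg (Zg i) f p"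
  proof (cases "i \<in> J \<and> inj v")
    case True
    have ne: "v (Suc i) \<noteq> v i" using True by (metis injD n_not_Suc_n)
    define w where "w = v \<circ> sw i"
    have w: "w (Suc i) = v i" "w i = v (Suc i)" "w \<circ> sw i = v" "inj w"
      unfolding w_def using True by (auto simp: comp_assoc inj_sw)
    have a: "Rg (Zg i) f (J, w) = f (J, v) + (if v i < v (Suc i) then tq * f (J, w) else 0)"
      using True w by (simp add: RZ)
    have b: "Rg (Zg i) f (J, v) = f (J, w) + (if v (Suc i) < v i then tq * f (J, v) else 0)"
      using True by (simp add: RZ w_def)
    have c: "Rg (Zg i) (Rg (Zg i) f) (J, v) = Rg (Zg i) f (J, w) + (if v (Suc i) < v i then tq * Rg (Zg i) f (J, v) else 0)"
      using True by (subst RZ) (simp add: w_def)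
    show ?thesis unfolding p c a b using True ne
      by (cases "v (Suc i) < v i") (auto simp: RE algebra_simps)
  next
    case False then show ?thesis unfolding p RE RZ if_not_P[OF False] by simp
  qed
qed

lemma RZ': "i \<in> J \<Longrightarrow> inj v \<Longrightarrow> Rg (Zg i) f (J,v) = f (J, v \<circ> sw i) + (if v (Suc i) < v i then tq * f (J,v) else 0)"
  by (simp add: RZ)
lemma RZ0: "i \<notin> J \<Longrightarrow> Rg (Zg i) f (J,v) = 0" by (simp add: RZ)
lemma RZ0': "\<not> inj v \<Longrightarrow> Rg (Zg i) f (J,v) = 0" by (simp add: RZ)

lemma sts: "sw i (sw (Suc i) (sw i x)) = sw (Suc i) (sw i (sw (Suc i) x))"
  by (simp add: transpose_def)
lemma c3: "v \<circ> sw i \<circ> sw (Suc i) \<circ> sw i = v \<circ> sw (Suc i) \<circ> sw i \<circ> sw (Suc i)"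
  by (simp add: fun_eq_iff sts)
lemma vv: "v \<circ> sw k \<circ> sw k = v" by (simp add: comp_assoc)

lemma R_braid_pt:
  assumes "i \<in> J" "Suc i \<in> J" "inj v"
  shows "Rg (Zg i) (Rg (Zg (Suc i)) (Rg (Zg i) f)) (J,v) = Rg (Zg (Suc i)) (Rg (Zg i) (Rg (Zg (Suc i)) f)) (J,v)"
proof -
  have ne: "v i \<noteq> v (Suc i)" "v i \<noteq> v (Suc (Suc i))" "v (Suc i) \<noteq> v (Suc (Suc i))"
    using assms(3) by (simp_all add: inj_eq)
  show ?thesis using assms ne
    apply (cases "v i < v (Suc i)"; cases "v (Suc i) < v (Suc (Suc i))"; cases "v i < v (Suc (Suc i))")
    apply (simp_all add: RZ' inj_sw c3 vv not_less split del: if_split)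
    apply (simp_all add: algebra_simps)
    done
qed

lemma R_braid:
  "Rg (Zg i) (Rg (Zg (Suc i)) (Rg (Zg i) f)) = Rg (Zg (Suc i)) (Rg (Zg i) (Rg (Zg (Suc i)) f))"
proof (rule ext)
  fix p :: "nat set \<times> (nat \<Rightarrow> nat)"
  obtain J v where p: "p = (J, v)" by (cases p)
  show "Rg (Zg i) (Rg (Zg (Suc i)) (Rg (Zg i) f)) p = Rg (Zg (Suc i)) (Rg (Zg i) (Rg (Zg (Suc i)) f)) p"
  proof (cases "i \<in> J \<and> Suc i \<in> J \<and> inj v")
    case True
    then show ?thesis unfolding p by (intro R_braid_pt) auto
  next
    case False
    then consider "\<not> inj v" | "inj v" "i \<notin> J" | "inj v" "Suc i \<notin> J" by blast
    then show ?thesis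
    proof cases
      case 1 then show ?thesis unfolding p by (simp add: RZ0')
    next
      case 2 then show ?thesis unfolding p by (cases "Suc i \<in> J") (simp_all add: RZ0 RZ' inj_sw)
    next
      case 3 then show ?thesis unfolding p by (cases "i \<in> J") (simp_all add: RZ0 RZ' inj_sw)
    qed
  qed
qed

lemma R_zz_comm:
  assumes "Suc i < j"
  shows "Rg (Zg j) (Rg (Zg i) f) = Rg (Zg i) (Rg (Zg j) f)"
proof (rule ext)
  fix p :: "nat set \<times> (nat \<Rightarrow> nat)"
  obtain J v where p: "p = (J, v)" by (cases p)
  have c: "v \<circ> sw j \<circ> sw i = v \<circ> sw i \<circ> sw j"
    using assms by (auto simp: fun_eq_iff transpose_def)
  have fx: "sw j (Suc i) = Suc i" "sw j i = i" "sw i (Suc j) = Suc j" "sw i j = j"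
    using assms by (auto simp: transpose_def)
  show "Rg (Zg j) (Rg (Zg i) f) p = Rg (Zg i) (Rg (Zg j) f) p"
  proof (cases "i \<in> J \<and> j \<in> J \<and> inj v")
    case True
    then show ?thesis unfolding p
      apply (cases "v (Suc i) < v i"; cases "v (Suc j) < v j")
      apply (simp_all add: RZ' inj_sw c fx split del: if_split)
      apply (simp_all add: algebra_simps)
      done
  next
    case False
    then consider "\<not> inj v" | "inj v" "i \<notin> J" | "inj v" "j \<notin> J" by blast
    then show ?thesis
    proof cases
      case 1 then show ?thesis unfolding p by (simp add: RZ0')
    next
      case 2 then show ?thesis unfolding p by (cases "j \<in> J") (simp_all add: RZ0 RZ' inj_sw)
    next
      case 3 then show ?thesis unfolding p by (cases "i \<in> J") (simp_all add: RZ0 RZ' inj_sw)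
    qed
  qed
qed


definition act :: "vec \<Rightarrow> gen list \<Rightarrow> vec" where "act f w = fold Rg w f"

lemma act_Nil[simp]: "act f [] = f" by (simp add: act_def)
lemma act_Cons[simp]: "act f (g # w) = act (Rg g f) w" by (simp add: act_def)
lemma act_append: "act f (x @ y) = act (act f x) y" by (simp add: act_def)

lemma Rg_lin: "Rg g (\<lambda>p. \<Sum>x\<in>X. c x * F x p) = (\<lambda>p. \<Sum>x\<in>X. c x * Rg g (F x) p)"
proof (rule ext)
  fix p :: "nat set \<times> (nat \<Rightarrow> nat)"
  obtain J v where p: "p = (J, v)" by (cases p)
  show "Rg g (\<lambda>p. \<Sum>x\<in>X. c x * F x p) p = (\<Sum>x\<in>X. c x * Rg g (F x) p)"
  proof (cases g)
    case (Eg i) then show ?thesis unfolding p by (auto simp: RE)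
  next
    case (Zg i) then show ?thesis unfolding p
      by (cases "i \<in> J"; cases "inj v"; cases "v (Suc i) < v i") (simp_all add: RZ' RZ0 RZ0' sum.distrib sum_distrib_left algebra_simps)
  qed
qed

lemma act_lin: "act (\<lambda>p. \<Sum>x\<in>X. c x * F x p) w = (\<lambda>p. \<Sum>x\<in>X. c x * act (F x) w p)"
proof (induction w arbitrary: F)
  case Nil then show ?case by simp
next
  case (Cons g w)
  show ?case by (simp add: Rg_lin Cons.IH)
qed

lemma act_zero: "act (\<lambda>p. 0) w = (\<lambda>p. 0)"
  using act_lin[of "\<lambda>x. 0" "\<lambda>x p. 0" "{}" w] by simp

definition Phi :: "fa \<Rightarrow> vec \<Rightarrow> vec" where
  "Phi a f = (\<lambda>p. \<Sum>w\<in>Poly_Mapping.keys a. Poly_Mapping.lookup a w * act f w p)"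

lemma Phi_eq: "finite W \<Longrightarrow> Poly_Mapping.keys a \<subseteq> W \<Longrightarrow> Phi a f = (\<lambda>p. \<Sum>w\<in>W. Poly_Mapping.lookup a w * act f w p)"
  unfolding Phi_def by (rule ext, rule sum.mono_neutral_left) (auto simp: in_keys_iff)

lemma Phi_add: "Phi (a + b) f = (\<lambda>p. Phi a f p + Phi b f p)"
proof -
  define W where "W = Poly_Mapping.keys a \<union> Poly_Mapping.keys b"
  have W: "finite W" "Poly_Mapping.keys a \<subseteq> W" "Poly_Mapping.keys b \<subseteq> W" "Poly_Mapping.keys (a + b) \<subseteq> W"
    unfolding W_def using keys_add[of a b] by auto
  show ?thesis using Phi_eq[OF W(1) W(2)] Phi_eq[OF W(1) W(3)] Phi_eq[OF W(1) W(4)]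
    by (simp add: lookup_add distrib_right sum.distrib)
qed

lemma Phi_zero: "Phi 0 f = (\<lambda>p. 0)" by (simp add: Phi_def)

lemma Phi_single: "Phi (Poly_Mapping.single w s) f = (\<lambda>p. s * act f w p)"
  by (subst Phi_eq[of "{w}"]) auto

lemma Phi_word: "Phi (fa_word w) f = act f w"
  by (simp add: fa_word_def Phi_single)

lemma Phi_sum: "Phi (\<Sum>i\<in>I. F i) f = (\<lambda>p. \<Sum>i\<in>I. Phi (F i) f p)"
  by (induction I rule: infinite_finite_induct) (simp_all add: Phi_zero Phi_add)

lemma Phi_diff: "Phi (a - b) f = (\<lambda>p. Phi a f p - Phi b f p)"
proof -
  define W where "W = Poly_Mapping.keys a \<union> Poly_Mapping.keys b"
  have kd: "Poly_Mapping.keys (a - b) \<subseteq> W"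
    unfolding W_def by (auto simp: in_keys_iff lookup_minus)
  have W: "finite W" "Poly_Mapping.keys a \<subseteq> W" "Poly_Mapping.keys b \<subseteq> W"
    unfolding W_def by auto
  show ?thesis using Phi_eq[OF W(1) W(2)] Phi_eq[OF W(1) W(3)] Phi_eq[OF W(1) kd]
    by (simp add: lookup_minus left_diff_distrib sum_subtractf)
qed

lemma Phi_scal: "Phi (fa_scal s a) f = (\<lambda>p. s * Phi a f p)"
proof -
  have k: "Poly_Mapping.keys (fa_scal s a) \<subseteq> Poly_Mapping.keys a"
    by (auto simp: in_keys_iff lookup_fa_scal)
  show ?thesis using Phi_eq[OF _ k] unfolding Phi_def
    by (simp add: lookup_fa_scal sum_distrib_left mult.assoc)
qed

lemma Phi_mult: "Phi (fa_mult a b) f = Phi b (Phi a f)"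
proof (rule ext)
  fix p
  have "Phi (fa_mult a b) f p = (\<Sum>x\<in>Poly_Mapping.keys a. \<Sum>y\<in>Poly_Mapping.keys b.
      (Poly_Mapping.lookup a x * Poly_Mapping.lookup b y) * act f (x @ y) p)"
    unfolding fa_mult_def by (simp add: Phi_sum Phi_single)
  also have "\<dots> = (\<Sum>y\<in>Poly_Mapping.keys b. Poly_Mapping.lookup b y *
      (\<Sum>x\<in>Poly_Mapping.keys a. Poly_Mapping.lookup a x * act (act f x) y p))"
    by (subst sum.swap) (simp add: sum_distrib_left act_append algebra_simps)
  also have "\<dots> = Phi b (Phi a f) p"
    unfolding Phi_def[of b] by (simp add: Phi_def[of a] act_lin)
  finally show "Phi (fa_mult a b) f p = Phi b (Phi a f) p" .
qed

lemma Phi_zero_vec: "Phi a (\<lambda>p. 0) = (\<lambda>p. 0)"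
  by (simp add: Phi_def act_zero)

lemma act2: "act f [g, h] = Rg h (Rg g f)" by simp
lemma act3: "act f [g, h, k] = Rg k (Rg h (Rg g f))" by simp

lemma Phi_rel: "r \<in> bH_rels n \<Longrightarrow> Phi r f = (\<lambda>p. 0)"
  unfolding bH_rels_def
proof (elim UnE CollectE exE conjE)
  fix i assume "r = fa_word [Eg i, Eg i] - fa_word [Eg i]"
  then show ?thesis by (simp add: Phi_diff Phi_word R_ee)
next
  fix i j assume "r = fa_word [Eg i, Eg j] - fa_word [Eg j, Eg i]"
  then show ?thesis by (simp add: Phi_diff Phi_word R_ee_comm)
next
  fix i j assume r: "r = fa_word [Zg i, Zg j, Zg i] - fa_word [Zg j, Zg i, Zg j]" and "j = Suc i \<or> i = Suc j"
  then consider "j = Suc i" | "i = Suc j" by blast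
  then show ?thesis
  proof cases
    case 1 then show ?thesis using r by (simp add: Phi_diff Phi_word R_braid)
  next
    case 2 then show ?thesis using r by (simp add: Phi_diff Phi_word R_braid)
  qed
next
  fix i j assume r: "r = fa_word [Zg i, Zg j] - fa_word [Zg j, Zg i]"
    and h: "1 \<le> i \<and> i < n \<and> 1 \<le> j \<and> j < n \<and> Suc i < j \<or> 1 \<le> i \<and> i < n \<and> 1 \<le> j \<and> j < n \<and> Suc j < i"
  then consider "Suc i < j" | "Suc j < i" by blast
  then show ?thesis
  proof cases
    case 1 then show ?thesis using r by (simp add: Phi_diff Phi_word R_zz_comm)
  next
    case 2 then show ?thesis using r by (simp add: Phi_diff Phi_word R_zz_comm[OF 2])
  qed
next
  fix i assume "r = fa_word [Eg i, Zg i] - fa_word [Zg i]"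
  then show ?thesis by (simp add: Phi_diff Phi_word R_ez)
next
  fix i j assume "r = fa_word [Eg i, Zg j] - fa_word [Zg j, Eg i]"
  then show ?thesis by (simp add: Phi_diff Phi_word R_ez_comm)
next
  fix i assume "r = fa_word [Zg i, Zg i] - fa_word [Eg i] - fa_scal (qL - qLinv) (fa_word [Zg i])"
  then show ?thesis by (simp add: Phi_diff Phi_word Phi_scal R_quad tq_def)
qed

lemma Phi_kill: "r \<in> bH_ideal n \<Longrightarrow> Phi r f = (\<lambda>p. 0)"
proof (induction r arbitrary: f rule: bH_ideal.induct)
  case (rel r) then show ?case by (rule Phi_rel)
next
  case zero then show ?case by (rule Phi_zero)
next
  case (add a b) then show ?case by (simp add: Phi_add)
next
  case (lmult x a) then show ?case by (simp add: Phi_mult)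
next
  case (rmult x a) then show ?case by (simp add: Phi_mult Phi_zero_vec)
qed

definition delta :: "nat set \<Rightarrow> (nat \<Rightarrow> nat) \<Rightarrow> vec" where
  "delta J0 u = (\<lambda>(J,v). if J = J0 \<and> v = u then 1 else 0)"

lemma Rg_E_delta: "inj u \<Longrightarrow> Rg (Eg i) (delta J0 u) = (if i \<in> J0 then delta J0 u else (\<lambda>p. 0))"
  by (rule ext, case_tac x) (auto simp: RE delta_def)

lemma comp_sw_iff: "v \<circ> sw i = u \<longleftrightarrow> v = u \<circ> sw i"
  by (auto simp: comp_assoc)

lemma Rg_Z_delta:
  assumes "inj u" "i \<in> J0" "u i < u (Suc i)"
  shows "Rg (Zg i) (delta J0 u) = delta J0 (u \<circ> sw i)"
proof (rule ext)
  fix p :: "nat set \<times> (nat \<Rightarrow> nat)"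
  obtain J v where p: "p = (J, v)" by (cases p)
  have nu: "u \<circ> sw i \<noteq> u"
  proof
    assume "u \<circ> sw i = u"
    then have "u (sw i i) = u i" by (metis comp_apply)
    then show False using assms(3) by simp
  qed
  show "Rg (Zg i) (delta J0 u) p = delta J0 (u \<circ> sw i) p"
  proof (cases "J = J0 \<and> v = u \<circ> sw i")
    case True
    then have "inj v" using assms(1) by (simp add: inj_sw)
    then show ?thesis unfolding p using True assms nu by (simp add: RZ delta_def comp_assoc)
  next
    case False
    have "delta J0 u (J, v \<circ> sw i) = 0" using False by (auto simp: delta_def comp_sw_iff)
    moreover have "(if v (Suc i) < v i then tq * delta J0 u (J, v) else 0) = 0"
      using assms(3) by (auto simp: delta_def)
    ultimately show ?thesis unfolding p using False by (auto simp: RZ delta_def)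
  qed
qed

lemma act_E_delta: "inj u \<Longrightarrow> act (delta J0 u) (map Eg xs) = (if set xs \<subseteq> J0 then delta J0 u else (\<lambda>p. 0))"
  by (induction xs) (auto simp: Rg_E_delta act_zero)

lemma act_Z_delta:
  "w permutes {1..n} \<Longrightarrow> reduced_word n w r \<Longrightarrow> set r \<subseteq> J0 \<Longrightarrow> act (delta J0 id) (map Zg r) = delta J0 w"
proof (induction r arbitrary: w rule: rev_induct)
  case Nil
  then have "w = id" unfolding reduced_word_def by simp
  then show ?case by simp
next
  case (snoc i r)
  define u where "u = perm_of_word r"
  have red: "reduced_word n u r" and lt: "u i < u (Suc i)"
    using reduced_snoc[OF snoc.prems(2,1)] by (auto simp: u_def)
  have sets: "set (r @ [i]) \<subseteq> {1..<n}" and w: "perm_of_word (r @ [i]) = w"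
    using snoc.prems unfolding reduced_word_def by auto
  have up: "u permutes {1..n}" unfolding u_def using sets by (intro pw_permutes) auto
  have IH: "act (delta J0 id) (map Zg r) = delta J0 u" using snoc.prems(3) by (intro snoc.IH[OF up red]) simp
  have "act (delta J0 id) (map Zg (r @ [i])) = Rg (Zg i) (delta J0 u)" by (simp add: act_append IH)
  also have "\<dots> = delta J0 (u \<circ> sw i)"
    by (rule Rg_Z_delta) (use up permutes_inj lt snoc.prems(3) in auto)
  also have "u \<circ> sw i = w" using w by (simp only: u_def pw_snoc)
  finally show ?case .
qed

lemma Gidx_Sigma: "Gidx n = Sigma (LP n) (young n)"
  by (auto simp: Gidx_def)

lemma finite_LP: "finite (LP n)"
  by (rule finite_subset[of _ "Pow (Pow {1..n})"]) (auto simp: LP_def dest: partition_onD1)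

lemma finite_young: "finite (young n P)"
  by (rule finite_subset[of _ "{w. w permutes {1..n}}"]) (auto simp: young_def finite_permutations)

lemma finite_Gidx: "finite (Gidx n)"
  by (simp add: Gidx_Sigma finite_LP finite_young)

lemma z_word_props:
  assumes "P \<in> LP n" "w \<in> young n P"
  shows "reduced_word n w (SOME r. reduced_word n w r)" "set (SOME r. reduced_word n w r) \<subseteq> Jof P"
proof -
  have wp: "w permutes {1..n}" and c: "\<forall>a. conn (Jof P) a (w a)" using young_iff[OF assms(1)] assms(2) by auto
  show r: "reduced_word n w (SOME r. reduced_word n w r)" by (rule reduced_word_exists[OF wp])
  show "set (SOME r. reduced_word n w r) \<subseteq> Jof P" by (rule reduced_letters[OF wp c r])
qed

lemma Phi_basis:
  assumes "(P, w) \<in> Gidx n"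
  shows "Phi (basis_elt n (P, w)) (delta J0 id) = (if Jof P \<subseteq> J0 then delta J0 w else (\<lambda>p. 0))"
proof -
  have P: "P \<in> LP n" and w: "w \<in> young n P" using assms by (auto simp: Gidx_def)
  have wp: "w permutes {1..n}" using w by (simp add: young_def)
  have fs: "set (filter (\<lambda>i. i \<in> Jof P) [1..<n]) = Jof P" using Jof_sub[OF P] by auto
  have ij: "inj (id :: nat \<Rightarrow> nat)" by simp
  have e: "act (delta J0 id) (E_word n P) = (if Jof P \<subseteq> J0 then delta J0 id else (\<lambda>p. 0))"
    unfolding E_word_eq act_E_delta[OF ij] fs by (rule refl)
  have z: "Jof P \<subseteq> J0 \<Longrightarrow> act (delta J0 id) (z_word n w) = delta J0 w"
    unfolding z_word_def using z_word_props[OF P w] by (intro act_Z_delta[OF wp]) auto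
  show ?thesis unfolding basis_elt_def
    by (simp add: Phi_word act_append e z act_zero)
qed

lemma Phi_S_eval:
  assumes "J0 \<subseteq> {1..<n}"
  shows "Phi (\<Sum>x\<in>Gidx n. fa_scal (c x) (basis_elt n x)) (delta J0 id) (J0, w0)
     = (\<Sum>x\<in>Gidx n. c x * (if Jof (fst x) \<subseteq> J0 \<and> snd x = w0 then 1 else 0))"
proof -
  have "Phi (\<Sum>x\<in>Gidx n. fa_scal (c x) (basis_elt n x)) (delta J0 id) (J0, w0)
      = (\<Sum>x\<in>Gidx n. c x * Phi (basis_elt n x) (delta J0 id) (J0, w0))"
    by (simp add: Phi_sum Phi_scal)
  also have "\<dots> = (\<Sum>x\<in>Gidx n. c x * (if Jof (fst x) \<subseteq> J0 \<and> snd x = w0 then 1 else 0))"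
  proof (rule sum.cong[OF refl])
    fix x assume x: "x \<in> Gidx n"
    obtain P w where xw: "x = (P, w)" by (cases x)
    show "c x * Phi (basis_elt n x) (delta J0 id) (J0, w0) = c x * (if Jof (fst x) \<subseteq> J0 \<and> snd x = w0 then 1 else 0)"
      using Phi_basis[of P w n J0] x unfolding xw by (auto simp: delta_def)
  qed
  finally show ?thesis .
qed

theorem independence:
  assumes S: "(\<Sum>x\<in>Gidx n. fa_scal (c x) (basis_elt n x)) \<in> bH_ideal n"
  shows "\<forall>x\<in>Gidx n. c x = 0"
proof -
  have ev: "(\<Sum>x\<in>Gidx n. c x * (if Jof (fst x) \<subseteq> J0 \<and> snd x = w0 then 1 else 0)) = 0"
    if "J0 \<subseteq> {1..<n}" for J0 w0
    using Phi_S_eval[OF that, of c w0] Phi_kill[OF S, of "delta J0 id"] by (metis)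
  have main: "\<forall>P0 \<in> LP n. card (Jof P0) = k \<longrightarrow> (\<forall>w0\<in>young n P0. c (P0, w0) = 0)" for k
  proof (induction k rule: less_induct)
    case (less k)
    show ?case
    proof (intro ballI impI)
      fix P0 w0 assume P0: "P0 \<in> LP n" and k: "card (Jof P0) = k" and w0: "w0 \<in> young n P0"
      define J0 where "J0 = Jof P0"
      have J0: "J0 \<subseteq> {1..<n}" unfolding J0_def by (rule Jof_sub[OF P0])
      have fJ0: "finite J0" using J0 finite_subset by blast
      define g where "g x = c x * (if Jof (fst x) \<subseteq> J0 \<and> snd x = w0 then 1 else 0)" for x
      have mem: "(P0, w0) \<in> Gidx n" using P0 w0 by (simp add: Gidx_def)
      have zero: "g x = 0" if x: "x \<in> Gidx n - {(P0, w0)}" for x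
      proof -
        obtain P w where xw: "x = (P, w)" by (cases x)
        have P: "P \<in> LP n" and w: "w \<in> young n P" using x xw by (auto simp: Gidx_def)
        show ?thesis
        proof (cases "Jof P \<subseteq> J0 \<and> w = w0")
          case True
          then have "P \<noteq> P0" using x xw by auto
          then have "Jof P \<noteq> J0" using Jof_inj[OF P P0] unfolding J0_def by blast
          then have "Jof P \<subset> J0" using True by blast
          then have "card (Jof P) < k" using psubset_card_mono[OF fJ0] k unfolding J0_def by blast
          then have "c (P, w) = 0" using less.IH P w by blast
          then show ?thesis by (simp add: g_def xw)
        next
          case False then show ?thesis by (auto simp: g_def xw)
        qed
      qed
      have "(\<Sum>x\<in>Gidx n. g x) = g (P0, w0) + (\<Sum>x\<in>Gidx n - {(P0, w0)}. g x)"
        by (rule sum.remove[OF finite_Gidx mem])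
      also have "(\<Sum>x\<in>Gidx n - {(P0, w0)}. g x) = 0" using zero by (rule sum.neutral[rule_format]) 
      also have "g (P0, w0) = c (P0, w0)" by (simp add: g_def J0_def)
      finally show "c (P0, w0) = 0" using ev[OF J0, of w0] unfolding g_def by simp
    qed
  qed
  show ?thesis using main by (auto simp: Gidx_def)
qed


definition Ew :: "nat \<Rightarrow> nat set \<Rightarrow> gen list" where
  "Ew n J = map Eg (filter (\<lambda>i. i \<in> J) [1..<n])"

definition rw :: "nat \<Rightarrow> (nat \<Rightarrow> nat) \<Rightarrow> nat list" where
  "rw n w = (SOME r. reduced_word n w r)"

lemma basis_eq: "basis_elt n (P, w) = fa_word (Ew n (Jof P) @ map Zg (rw n w))"
  by (simp add: basis_elt_def E_word_eq Ew_def z_word_def rw_def)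

lemma valid_Ew: "J \<subseteq> {1..<n} \<Longrightarrow> valid n (Ew n J)"
  by (auto simp: valid_def Ew_def gen_valid_def)

lemma valid_Eg: "valid n (map Eg xs) \<longleftrightarrow> set xs \<subseteq> {1..<n}"
  by (auto simp: valid_def gen_valid_def)

lemma valid_Zg: "valid n (map Zg xs) \<longleftrightarrow> set xs \<subseteq> {1..<n}"
  by (auto simp: valid_def gen_valid_def)

lemma eqv_ctx: "eqv n (fa_word u) (fa_word v) \<Longrightarrow> valid n x \<Longrightarrow> valid n y \<Longrightarrow> eqv n (fa_word (x @ u @ y)) (fa_word (x @ v @ y))"
  by (rule eqv_word_ctx)

lemma commE:
  assumes "x \<in> {1..<n}" "set ys \<subseteq> {1..<n}"
  shows "eqv n (fa_word (Eg x # map Eg ys)) (fa_word (map Eg ys @ [Eg x]))"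
  using assms(2)
proof (induction ys)
  case Nil then show ?case by simp
next
  case (Cons y ys)
  have s1: "eqv n (fa_word ([] @ [Eg x, Eg y] @ map Eg ys)) (fa_word ([] @ [Eg y, Eg x] @ map Eg ys))"
    by (rule eqv_ctx[OF eqv_ee_comm]) (use assms Cons.prems in \<open>auto simp: valid_Eg\<close>)
  have s2: "eqv n (fa_word ([Eg y] @ (Eg x # map Eg ys) @ [])) (fa_word ([Eg y] @ (map Eg ys @ [Eg x]) @ []))"
    by (rule eqv_ctx[OF Cons.IH]) (use Cons.prems in \<open>auto simp: gen_valid_def\<close>)
  show ?case using eqv_trans[OF s1[simplified] s2[simplified]] by simp
qed

lemma upt_split_at: "x \<in> {1..<n} \<Longrightarrow> [1..<n] = [1..<x] @ x # [Suc x..<n]"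
proof -
  assume x: "x \<in> {1..<n}"
  have "[1..<n] = [1..<x] @ [x..<n]" using x upt_add_eq_append[of 1 x "n - x"] by simp
  also have "[x..<n] = x # [Suc x..<n]" using x by (simp add: upt_conv_Cons)
  finally show ?thesis .
qed

lemma INS:
  assumes x: "x \<in> {1..<n}" and J: "J \<subseteq> {1..<n}"
  shows "eqv n (fa_word (Eg x # Ew n J)) (fa_word (Ew n (insert x J)))"
proof -
  define A where "A = filter (\<lambda>i. i \<in> J) [1..<x]"
  define C where "C = filter (\<lambda>i. i \<in> J) [Suc x..<n]"
  define B where "B = (if x \<in> J then [Eg x] else [])"
  have e1: "Ew n J = map Eg A @ B @ map Eg C"
    unfolding Ew_def A_def B_def C_def by (subst upt_split_at[OF x]) simp
  have fA: "filter (\<lambda>i. i \<in> insert x J) [1..<x] = A" unfolding A_def by (rule filter_cong) auto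
  have fC: "filter (\<lambda>i. i \<in> insert x J) [Suc x..<n] = C" unfolding C_def by (rule filter_cong) auto
  have "filter (\<lambda>i. i \<in> insert x J) [1..<n] = A @ x # C"
    by (subst upt_split_at[OF x], simp only: filter_append filter.simps fA fC insertI1 if_True)
  then have e2: "Ew n (insert x J) = map Eg A @ [Eg x] @ map Eg C"
    unfolding Ew_def by simp
  have sA: "set A \<subseteq> {1..<n}" "set C \<subseteq> {1..<n}" unfolding A_def C_def using x by auto
  have vB: "valid n B" using x by (auto simp: B_def gen_valid_def)
  have s1: "eqv n (fa_word ([] @ (Eg x # map Eg A) @ (B @ map Eg C))) (fa_word ([] @ (map Eg A @ [Eg x]) @ (B @ map Eg C)))"
    by (rule eqv_ctx[OF commE[OF x sA(1)]]) (use sA vB in \<open>auto simp: valid_Eg\<close>)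
  have s2: "eqv n (fa_word (map Eg A @ ([Eg x] @ B) @ map Eg C)) (fa_word (map Eg A @ [Eg x] @ map Eg C))"
  proof (cases "x \<in> J")
    case True
    then show ?thesis unfolding B_def
      by (simp only: if_True append.simps) (rule eqv_ctx[OF eqv_ee, simplified], use x sA in \<open>auto simp: valid_Eg\<close>)
  next
    case False
    then show ?thesis unfolding B_def by simp
  qed
  show ?thesis unfolding e1 e2 using eqv_trans[OF s1[simplified] s2[simplified]] by simp
qed

lemma Ew_snoc:
  assumes x: "x \<in> {1..<n}" and J: "J \<subseteq> {1..<n}"
  shows "eqv n (fa_word (Ew n J @ [Eg x])) (fa_word (Ew n (insert x J)))"
proof -
  have "eqv n (fa_word (Eg x # Ew n J)) (fa_word (Ew n J @ [Eg x]))"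
    unfolding Ew_def by (rule commE[OF x]) (use J in auto)
  then show ?thesis using INS[OF x J] eqv_sym eqv_trans by blast
qed

lemma commEZ:
  assumes "i \<in> {1..<n}" "set r \<subseteq> {1..<n}"
  shows "eqv n (fa_word (map Zg r @ [Eg i])) (fa_word (Eg i # map Zg r))"
  using assms(2)
proof (induction r)
  case Nil then show ?case by simp
next
  case (Cons y r)
  have s1: "eqv n (fa_word ([Zg y] @ (map Zg r @ [Eg i]) @ [])) (fa_word ([Zg y] @ (Eg i # map Zg r) @ []))"
    by (rule eqv_ctx[OF Cons.IH]) (use Cons.prems in \<open>auto simp: gen_valid_def\<close>)
  have s2: "eqv n (fa_word ([] @ [Zg y, Eg i] @ map Zg r)) (fa_word ([] @ [Eg i, Zg y] @ map Zg r))"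
    by (rule eqv_ctx[OF eqv_sym[OF eqv_ez_comm]]) (use assms Cons.prems in \<open>auto simp: valid_Zg\<close>)
  show ?case using eqv_trans[OF s1[simplified] s2[simplified]] by simp
qed

lemma beq_eqv: "beq n r r' \<Longrightarrow> eqv n (fa_word (map Zg r)) (fa_word (map Zg r'))"
proof (induction rule: beq.induct)
  case (brefl r) then show ?case by simp
next
  case (bsym r r') show ?case using bsym.IH by (rule eqv_sym)
next
  case (btrans r r' r'') show ?case using btrans.IH by (rule eqv_trans)
next
  case (bcomm xs ys i j)
  have "eqv n (fa_word (map Zg xs @ [Zg i, Zg j] @ map Zg ys)) (fa_word (map Zg xs @ [Zg j, Zg i] @ map Zg ys))"
    by (rule eqv_ctx[OF eqv_zz_comm]) (use bcomm in \<open>auto simp: valid_Zg\<close>)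
  then show ?case by simp
next
  case (bbraid xs ys i)
  have "eqv n (fa_word (map Zg xs @ [Zg i, Zg (Suc i), Zg i] @ map Zg ys)) (fa_word (map Zg xs @ [Zg (Suc i), Zg i, Zg (Suc i)] @ map Zg ys))"
    by (rule eqv_ctx[OF eqv_braid]) (use bbraid in \<open>auto simp: valid_Zg\<close>)
  then show ?case by simp
qed

lemma reduced_eqv:
  "w permutes {1..n} \<Longrightarrow> reduced_word n w r \<Longrightarrow> reduced_word n w r' \<Longrightarrow> eqv n (fa_word (map Zg r)) (fa_word (map Zg r'))"
  using matsumoto beq_eqv eqv_sym eqv_trans by metis

definition Span :: "nat \<Rightarrow> fa \<Rightarrow> bool" where
  "Span n a \<longleftrightarrow> (\<exists>c. (\<forall>x. x \<notin> Gidx n \<longrightarrow> c x = 0) \<and> eqv n a (\<Sum>x\<in>Gidx n. fa_scal (c x) (basis_elt n x)))"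

lemma Span_zero: "Span n 0"
  unfolding Span_def by (rule exI[of _ "\<lambda>x. 0"]) simp

lemma Span_add: "Span n a \<Longrightarrow> Span n b \<Longrightarrow> Span n (a + b)"
proof -
  assume "Span n a" "Span n b"
  then obtain c d where c: "\<forall>x. x \<notin> Gidx n \<longrightarrow> c x = 0" "eqv n a (\<Sum>x\<in>Gidx n. fa_scal (c x) (basis_elt n x))"
    and d: "\<forall>x. x \<notin> Gidx n \<longrightarrow> d x = 0" "eqv n b (\<Sum>x\<in>Gidx n. fa_scal (d x) (basis_elt n x))"
    unfolding Span_def by blast
  have "eqv n (a + b) ((\<Sum>x\<in>Gidx n. fa_scal (c x) (basis_elt n x)) + (\<Sum>x\<in>Gidx n. fa_scal (d x) (basis_elt n x)))"
    by (rule eqv_add[OF c(2) d(2)])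
  also have "(\<Sum>x\<in>Gidx n. fa_scal (c x) (basis_elt n x)) + (\<Sum>x\<in>Gidx n. fa_scal (d x) (basis_elt n x))
      = (\<Sum>x\<in>Gidx n. fa_scal (c x + d x) (basis_elt n x))"
    by (simp add: fa_scal_add2 sum.distrib)
  finally show "Span n (a + b)" unfolding Span_def using c(1) d(1) by (intro exI[of _ "\<lambda>x. c x + d x"]) auto
qed

lemma Span_scal: "Span n a \<Longrightarrow> Span n (fa_scal s a)"
proof -
  assume "Span n a"
  then obtain c where c: "\<forall>x. x \<notin> Gidx n \<longrightarrow> c x = 0" "eqv n a (\<Sum>x\<in>Gidx n. fa_scal (c x) (basis_elt n x))"
    unfolding Span_def by blast
  have "eqv n (fa_scal s a) (fa_scal s (\<Sum>x\<in>Gidx n. fa_scal (c x) (basis_elt n x)))" by (rule eqv_scal[OF c(2)])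
  also have "fa_scal s (\<Sum>x\<in>Gidx n. fa_scal (c x) (basis_elt n x)) = (\<Sum>x\<in>Gidx n. fa_scal (s * c x) (basis_elt n x))"
    by (simp add: fa_scal_sum fa_scal_scal)
  finally show ?thesis unfolding Span_def using c(1) by (intro exI[of _ "\<lambda>x. s * c x"]) auto
qed

lemma Span_eqv: "eqv n a b \<Longrightarrow> Span n b \<Longrightarrow> Span n a"
  unfolding Span_def using eqv_trans by blast

lemma Span_basis: "x \<in> Gidx n \<Longrightarrow> Span n (basis_elt n x)"
proof -
  assume x: "x \<in> Gidx n"
  have "(\<Sum>y\<in>Gidx n. fa_scal (if y = x then 1 else 0) (basis_elt n y)) = basis_elt n x"
    using x finite_Gidx[of n] by (simp add: if_distrib[of "\<lambda>s. fa_scal s _"] sum.delta cong: if_cong)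
  then show ?thesis unfolding Span_def using x
    by (intro exI[of _ "\<lambda>y. if y = x then 1 else 0"]) auto
qed

lemma Span_sum: "(\<And>i. i \<in> I \<Longrightarrow> Span n (F i)) \<Longrightarrow> Span n (\<Sum>i\<in>I. F i)"
  by (induction I rule: infinite_finite_induct) (auto intro: Span_zero Span_add)

definition PJ :: "nat \<Rightarrow> nat set \<Rightarrow> nat set set" where "PJ n J = {1..n} // crel n J"

lemma PJ: "J \<subseteq> {1..<n} \<Longrightarrow> PJ n J \<in> LP n" "J \<subseteq> {1..<n} \<Longrightarrow> Jof (PJ n J) = J"
  unfolding PJ_def using LP_of_J by auto

lemma conn_mono: "J \<subseteq> J' \<Longrightarrow> conn J a b \<Longrightarrow> conn J' a b"
  unfolding conn_def by blast

lemma young_mono: "P \<in> LP n \<Longrightarrow> P' \<in> LP n \<Longrightarrow> Jof P \<subseteq> Jof P' \<Longrightarrow> w \<in> young n P \<Longrightarrow> w \<in> young n P'"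
  using young_iff conn_mono by metis

lemma young_sw:
  assumes P: "P \<in> LP n" and i: "i \<in> Jof P" and w: "w \<in> young n P"
  shows "w \<circ> sw i \<in> young n P"
proof -
  have wp: "w permutes {1..n}" and c: "\<forall>a. conn (Jof P) a (w a)" using young_iff[OF P] w by auto
  have i1: "i \<in> {1..<n}" using i Jof_sub[OF P] by auto
  have sp: "sw i permutes {1..n}" using i1 by (intro permutes_swap_id) auto
  have "conn (Jof P) a (sw i a)" for a
  proof -
    have ci: "conn (Jof P) i (Suc i)" using i unfolding conn_def by (auto simp: le_Suc_eq less_Suc_eq_le)
    then show ?thesis
      by (cases "a = i"; cases "a = Suc i") (auto simp: conn_sym)
  qed
  then have "conn (Jof P) a ((w \<circ> sw i) a)" for a using c conn_trans by (metis comp_apply)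
  then show ?thesis using young_iff[OF P] permutes_compose[OF sp wp] by blast
qed

lemma Gidx_PJ: "J \<subseteq> {1..<n} \<Longrightarrow> w \<in> young n (PJ n J) \<Longrightarrow> Span n (fa_word (Ew n J @ map Zg (rw n w)))"
proof -
  assume J: "J \<subseteq> {1..<n}" and w: "w \<in> young n (PJ n J)"
  have "(PJ n J, w) \<in> Gidx n" using PJ(1)[OF J] w by (simp add: Gidx_def)
  from Span_basis[OF this] show ?thesis by (simp add: basis_eq PJ(2)[OF J])
qed

lemma rw_props:
  assumes "P \<in> LP n" "w \<in> young n P"
  shows "reduced_word n w (rw n w)" "set (rw n w) \<subseteq> Jof P" "set (rw n w) \<subseteq> {1..<n}"
  using z_word_props[OF assms] Jof_sub[OF assms(1)] unfolding rw_def by auto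

lemma EZ_move:
  assumes J: "J \<subseteq> {1..<n}" and i: "i \<in> {1..<n}" and r: "set r \<subseteq> {1..<n}"
  shows "eqv n (fa_word (Ew n J @ map Zg r @ [Eg i])) (fa_word (Ew n (insert i J) @ map Zg r))"
proof -
  have s1: "eqv n (fa_word (Ew n J @ (map Zg r @ [Eg i]) @ [])) (fa_word (Ew n J @ (Eg i # map Zg r) @ []))"
    by (rule eqv_ctx[OF commEZ[OF i r]]) (use J valid_Ew in auto)
  have s2: "eqv n (fa_word ([] @ (Ew n J @ [Eg i]) @ map Zg r)) (fa_word ([] @ Ew n (insert i J) @ map Zg r))"
    by (rule eqv_ctx[OF Ew_snoc[OF i J]]) (use r in \<open>auto simp: valid_Zg\<close>)
  show ?thesis using eqv_trans[OF s1[simplified] s2[simplified]] by simp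
qed

lemma K_E:
  assumes P: "P \<in> LP n" and w: "w \<in> young n P" and i: "i \<in> {1..<n}"
  shows "Span n (fa_word (Ew n (Jof P) @ map Zg (rw n w) @ [Eg i]))"
proof -
  have J: "Jof P \<subseteq> {1..<n}" by (rule Jof_sub[OF P])
  have J': "insert i (Jof P) \<subseteq> {1..<n}" using J i by auto
  have "w \<in> young n (PJ n (insert i (Jof P)))"
    by (rule young_mono[OF P PJ(1)[OF J'] _ w]) (auto simp: PJ(2)[OF J'])
  then have "Span n (fa_word (Ew n (insert i (Jof P)) @ map Zg (rw n w)))" by (rule Gidx_PJ[OF J'])
  then show ?thesis using EZ_move[OF J i rw_props(3)[OF P w]] Span_eqv by blast
qed

lemma quad_ctx:
  assumes "valid n x" "1 \<le> i" "i < n"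
  shows "eqv n (fa_word (x @ [Zg i, Zg i])) (fa_word (x @ [Eg i]) + fa_scal tq (fa_word (x @ [Zg i])))"
proof -
  have "eqv n (fa_mult (fa_word x) (fa_word [Zg i, Zg i])) (fa_mult (fa_word x) (fa_word [Eg i] + fa_scal (qL - qLinv) (fa_word [Zg i])))"
    by (rule eqv_lmult[OF FA_word[OF assms(1)] eqv_quad[OF assms(2,3)]])
  then show ?thesis by (simp add: fa_mult_add_right fa_mult_scal_right fa_word_mult tq_def)
qed

lemma K_Z_in:
  assumes P: "P \<in> LP n" and w: "w \<in> young n P" and i: "i \<in> Jof P"
  shows "Span n (fa_word (Ew n (Jof P) @ map Zg (rw n w) @ [Zg i]))"
proof -
  define J where "J = Jof P"
  have J: "J \<subseteq> {1..<n}" unfolding J_def by (rule Jof_sub[OF P])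
  have i1: "1 \<le> i" "i < n" using i J unfolding J_def by auto
  have wp: "w permutes {1..n}" using w by (simp add: young_def)
  define r where "r = rw n w"
  have r: "reduced_word n w r" "set r \<subseteq> {1..<n}" using rw_props[OF P w] unfolding r_def by auto
  have vJ: "valid n (Ew n J)" using valid_Ew[OF J] .
  have ne: "w i \<noteq> w (Suc i)" by (rule permutes_neq[OF wp]) simp
  show ?thesis unfolding J_def[symmetric] r_def[symmetric]
  proof (cases "w i < w (Suc i)")
    case True
    define w' where "w' = w \<circ> sw i"
    have w'y: "w' \<in> young n P" unfolding w'_def by (rule young_sw[OF P i w])
    have w'p: "w' permutes {1..n}" using w'y by (simp add: young_def)
    have red1: "reduced_word n w' (r @ [i])"
    proof -
      have "invc n w' = Suc (invc n w)" unfolding w'_def by (rule invc_step(1)[OF wp i1 True])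
      moreover have "length r = invc n w" "perm_of_word r = w" using r(1) reduced_word_iff[OF wp] by auto
      ultimately show ?thesis using reduced_word_iff[OF w'p] r(2) i1 by (auto simp: pw_snoc w'_def)
    qed
    have red2: "reduced_word n w' (rw n w')" using rw_props(1)[OF P w'y] .
    have "eqv n (fa_word (map Zg (r @ [i]))) (fa_word (map Zg (rw n w')))" by (rule reduced_eqv[OF w'p red1 red2])
    then have "eqv n (fa_word (Ew n J @ map Zg (r @ [i]) @ [])) (fa_word (Ew n J @ map Zg (rw n w') @ []))"
      using vJ by (intro eqv_ctx) auto
    moreover have "Span n (fa_word (Ew n J @ map Zg (rw n w')))"
      using Span_basis[of "(P, w')" n] P w'y by (simp add: Gidx_def basis_eq J_def)
    ultimately show "Span n (fa_word (Ew n J @ map Zg r @ [Zg i]))" using Span_eqv by simp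
  next
    case False
    then have lt: "w (Suc i) < w i" using ne by simp
    define u where "u = w \<circ> sw i"
    have uy: "u \<in> young n P" unfolding u_def by (rule young_sw[OF P i w])
    have up: "u permutes {1..n}" using uy by (simp add: young_def)
    have ult: "u i < u (Suc i)" using lt by (simp add: u_def)
    have uw: "u \<circ> sw i = w" by (simp add: u_def comp_assoc)
    define ru where "ru = rw n u"
    have ru: "reduced_word n u ru" "set ru \<subseteq> {1..<n}" using rw_props[OF P uy] unfolding ru_def by auto
    have red1: "reduced_word n w (ru @ [i])"
    proof -
      have "invc n w = Suc (invc n u)" using invc_step(1)[OF up i1 ult] uw by simp
      moreover have "length ru = invc n u" "perm_of_word ru = u" using ru(1) reduced_word_iff[OF up] by auto
      ultimately show ?thesis using reduced_word_iff[OF wp] ru(2) i1 uw by (auto simp: pw_snoc)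
    qed
    have rw_eq: "eqv n (fa_word (map Zg r)) (fa_word (map Zg (ru @ [i])))" by (rule reduced_eqv[OF wp r(1) red1])
    have vru: "valid n (Ew n J @ map Zg ru)" using vJ ru(2) by (simp add: valid_Zg)
    have s1: "eqv n (fa_word (Ew n J @ map Zg r @ [Zg i])) (fa_word (Ew n J @ map Zg (ru @ [i]) @ [Zg i]))"
      using vJ i1 by (intro eqv_ctx[OF rw_eq]) (auto simp: gen_valid_def)
    have s2: "eqv n (fa_word ((Ew n J @ map Zg ru) @ [Zg i, Zg i]))
        (fa_word ((Ew n J @ map Zg ru) @ [Eg i]) + fa_scal tq (fa_word ((Ew n J @ map Zg ru) @ [Zg i])))"
      by (rule quad_ctx[OF vru i1])
    have A: "Span n (fa_word ((Ew n J @ map Zg ru) @ [Eg i]))"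
    proof -
      have "eqv n (fa_word (Ew n J @ map Zg ru @ [Eg i])) (fa_word (Ew n (insert i J) @ map Zg ru))"
        by (rule EZ_move[OF J _ ru(2)]) (use i1 in auto)
      moreover have "insert i J = J" using i J_def by auto
      moreover have "Span n (fa_word (Ew n J @ map Zg ru))"
        using Span_basis[of "(P, u)" n] P uy by (simp add: Gidx_def basis_eq J_def ru_def)
      ultimately show ?thesis using Span_eqv by simp
    qed
    have B: "Span n (fa_word ((Ew n J @ map Zg ru) @ [Zg i]))"
    proof -
      have "eqv n (fa_word (Ew n J @ map Zg (ru @ [i]) @ [])) (fa_word (Ew n J @ map Zg r @ []))"
        using vJ by (intro eqv_ctx[OF eqv_sym[OF rw_eq]]) auto
      moreover have "Span n (fa_word (Ew n J @ map Zg r))"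
        using Span_basis[of "(P, w)" n] P w by (simp add: Gidx_def basis_eq J_def r_def)
      ultimately show ?thesis using Span_eqv by simp
    qed
    have "Span n (fa_word ((Ew n J @ map Zg ru) @ [Eg i]) + fa_scal tq (fa_word ((Ew n J @ map Zg ru) @ [Zg i])))"
      by (rule Span_add[OF A Span_scal[OF B]])
    then have "Span n (fa_word ((Ew n J @ map Zg ru) @ [Zg i, Zg i]))" using s2 Span_eqv by blast
    then show "Span n (fa_word (Ew n J @ map Zg r @ [Zg i]))" using s1 Span_eqv by simp
  qed
qed

lemma K_Z:
  assumes P: "P \<in> LP n" and w: "w \<in> young n P" and i: "i \<in> {1..<n}"
  shows "Span n (fa_word (Ew n (Jof P) @ map Zg (rw n w) @ [Zg i]))"
proof (cases "i \<in> Jof P")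
  case True then show ?thesis by (rule K_Z_in[OF P w])
next
  case False
  define J where "J = Jof P"
  have J: "J \<subseteq> {1..<n}" unfolding J_def by (rule Jof_sub[OF P])
  define J' where "J' = insert i J"
  have J': "J' \<subseteq> {1..<n}" using J i by (auto simp: J'_def)
  define P' where "P' = PJ n J'"
  have P': "P' \<in> LP n" "Jof P' = J'" using PJ[OF J'] by (auto simp: P'_def)
  have w': "w \<in> young n P'" by (rule young_mono[OF P P'(1) _ w]) (auto simp: P'(2) J'_def J_def)
  have r: "set (rw n w) \<subseteq> {1..<n}" using rw_props[OF P w] by auto
  have vJ: "valid n (Ew n J)" using valid_Ew[OF J] .
  have s1: "eqv n (fa_word ((Ew n J @ map Zg (rw n w)) @ [Zg i] @ [])) (fa_word ((Ew n J @ map Zg (rw n w)) @ [Eg i, Zg i] @ []))"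
    by (rule eqv_ctx[OF eqv_sym[OF eqv_ez]]) (use i vJ r in \<open>auto simp: valid_Zg\<close>)
  have s2: "eqv n (fa_word ([] @ (Ew n J @ map Zg (rw n w) @ [Eg i]) @ [Zg i])) (fa_word ([] @ (Ew n J' @ map Zg (rw n w)) @ [Zg i]))"
    by (rule eqv_ctx[OF EZ_move[OF J i r, folded J'_def]]) (use i in \<open>auto simp: gen_valid_def\<close>)
  have "Span n (fa_word (Ew n (Jof P') @ map Zg (rw n w) @ [Zg i]))"
    by (rule K_Z_in[OF P'(1) w']) (simp add: P'(2) J'_def)
  then have "Span n (fa_word (Ew n J' @ map Zg (rw n w) @ [Zg i]))" by (simp add: P'(2))
  then show ?thesis unfolding J_def[symmetric] using eqv_trans[OF s1[simplified] s2[simplified]] Span_eqv by simp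
qed

lemma K:
  assumes x: "x \<in> Gidx n" and g: "gen_valid n g"
  shows "Span n (fa_mult (basis_elt n x) (fa_word [g]))"
proof -
  obtain P w where xw: "x = (P, w)" by (cases x)
  have P: "P \<in> LP n" and w: "w \<in> young n P" using x xw by (auto simp: Gidx_def)
  have e: "fa_mult (basis_elt n x) (fa_word [g]) = fa_word (Ew n (Jof P) @ map Zg (rw n w) @ [g])"
    by (simp add: xw basis_eq fa_word_mult)
  show ?thesis
  proof (cases g)
    case (Eg i)
    then have "i \<in> {1..<n}" using g by (simp add: gen_valid_def)
    then show ?thesis using e K_E[OF P w] Eg by simp
  next
    case (Zg i)
    then have "i \<in> {1..<n}" using g by (simp add: gen_valid_def)
    then show ?thesis using e K_Z[OF P w] Zg by simp
  qed
qed

lemma Span_word: "valid n w \<Longrightarrow> Span n (fa_word w)"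
proof (induction w rule: rev_induct)
  case Nil
  have J: "{} \<subseteq> {1..<n}" by simp
  have idy: "id \<in> young n (PJ n {})" using young_iff[OF PJ(1)[OF J]] by simp
  have red: "reduced_word n id (rw n id)" using rw_props(1)[OF PJ(1)[OF J] idy] .
  then have "length (rw n id) = 0" using reduced_word_iff[of id n "rw n id"] by simp
  then have "rw n id = []" by simp
  moreover have "Ew n {} = []" by (simp add: Ew_def)
  ultimately have "basis_elt n (PJ n {}, id) = fa_word []" by (simp add: basis_eq PJ(2)[OF J])
  moreover have "(PJ n {}, id) \<in> Gidx n" using PJ(1)[OF J] idy by (simp add: Gidx_def)
  ultimately show ?case using Span_basis by metis
next
  case (snoc g w)
  then have vw: "valid n w" and g: "gen_valid n g" by auto
  obtain c where c: "\<forall>x. x \<notin> Gidx n \<longrightarrow> c x = 0" "eqv n (fa_word w) (\<Sum>x\<in>Gidx n. fa_scal (c x) (basis_elt n x))"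
    using snoc.IH[OF vw] unfolding Span_def by blast
  have "eqv n (fa_mult (fa_word w) (fa_word [g])) (fa_mult (\<Sum>x\<in>Gidx n. fa_scal (c x) (basis_elt n x)) (fa_word [g]))"
    by (rule eqv_rmult[OF FA_word c(2)]) (simp add: g)
  moreover have "fa_mult (\<Sum>x\<in>Gidx n. fa_scal (c x) (basis_elt n x)) (fa_word [g]) = (\<Sum>x\<in>Gidx n. fa_scal (c x) (fa_mult (basis_elt n x) (fa_word [g])))"
    by (simp add: fa_mult_sum_left fa_mult_scal_left)
  moreover have "Span n (\<Sum>x\<in>Gidx n. fa_scal (c x) (fa_mult (basis_elt n x) (fa_word [g])))"
    by (rule Span_sum, rule Span_scal, rule K[OF _ g])
  ultimately show ?case using Span_eqv by (simp add: fa_word_mult)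
qed

theorem spanning: "a \<in> FA n \<Longrightarrow> Span n a"
proof -
  assume a: "a \<in> FA n"
  have "a = (\<Sum>w\<in>Poly_Mapping.keys a. fa_scal (Poly_Mapping.lookup a w) (fa_word w))"
    by (subst pm_decomp) (simp add: fa_word_def fa_scal_single)
  moreover have "Span n (\<Sum>w\<in>Poly_Mapping.keys a. fa_scal (Poly_Mapping.lookup a w) (fa_word w))"
    using a by (intro Span_sum Span_scal Span_word) (auto simp: FA_iff_valid)
  ultimately show ?thesis by simp
qed


definition Y :: "nat \<Rightarrow> nat set \<Rightarrow> (nat \<Rightarrow> nat) set" where
  "Y n J = {w. w permutes {1..n} \<and> (\<forall>a. conn J a (w a))}"

lemma finite_Y: "finite (Y n J)"
  by (rule finite_subset[of _ "{w. w permutes {1..n}}"]) (auto simp: Y_def finite_permutations)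

lemma Y_split:
  assumes kn: "k < n" and J0: "J0 \<subseteq> {1..<k}"
  shows "card (Y n (J0 \<union> {Suc k..<n})) = card (Y k J0) * fact (n - k)"
proof -
  define J where "J = J0 \<union> {Suc k..<n}"
  have kJ: "k \<notin> J" using J0 by (auto simp: J_def)
  have J0J: "J0 \<subseteq> J" by (auto simp: J_def)
  have Jlow: "x \<in> J \<Longrightarrow> x < k \<Longrightarrow> x \<in> J0" for x by (auto simp: J_def)
  define F where "F w = (\<lambda>a. if a \<le> k then w a else a, \<lambda>a. if k < a then w a else a)" for w :: "nat \<Rightarrow> nat"
  define PP where "PP = {p. p permutes {Suc k..n}}"
  have m1: "w a \<le> k" if w: "w \<in> Y n J" and a: "a \<le> k" for w a
  proof (rule ccontr)
    assume h: "\<not> w a \<le> k"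
    have "\<forall>k'. min a (w a) \<le> k' \<and> k' < max a (w a) \<longrightarrow> k' \<in> J" using w unfolding Y_def conn_def by blast
    moreover have "min a (w a) \<le> k \<and> k < max a (w a)" using h a by simp
    ultimately have "k \<in> J" by blast
    with kJ show False by simp
  qed
  have m2: "k < w a" if w: "w \<in> Y n J" and a: "k < a" for w a
  proof (rule ccontr)
    assume h: "\<not> k < w a"
    have "\<forall>k'. min a (w a) \<le> k' \<and> k' < max a (w a) \<longrightarrow> k' \<in> J" using w unfolding Y_def conn_def by blast
    moreover have "min a (w a) \<le> k \<and> k < max a (w a)" using h a by simp
    ultimately have "k \<in> J" by blast
    with kJ show False by simp
  qed
  have b1: "bij_betw w {1..k} {1..k}" if w: "w \<in> Y n J" for w
  proof -
    have wp: "w permutes {1..n}" using w by (simp add: Y_def)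
    have "w ` {1..k} = {1..k}"
    proof (rule endo_inj_surj)
      show "w ` {1..k} \<subseteq> {1..k}"
      proof
        fix y assume "y \<in> w ` {1..k}"
        then obtain a where a: "a \<in> {1..k}" "y = w a" by blast
        then have "w a \<in> {1..n}" using kn permutes_in_image[OF wp] by auto
        then show "y \<in> {1..k}" using m1[OF w] a by auto
      qed
      show "inj_on w {1..k}" using permutes_inj_on[OF wp] .
    qed simp
    then show ?thesis using permutes_inj_on[OF wp] by (simp add: bij_betw_def)
  qed
  have b2: "bij_betw w {Suc k..n} {Suc k..n}" if w: "w \<in> Y n J" for w
  proof -
    have wp: "w permutes {1..n}" using w by (simp add: Y_def)
    have "w ` {Suc k..n} = {Suc k..n}"
    proof (rule endo_inj_surj)
      show "w ` {Suc k..n} \<subseteq> {Suc k..n}"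
      proof
        fix y assume "y \<in> w ` {Suc k..n}"
        then obtain a where a: "a \<in> {Suc k..n}" "y = w a" by blast
        then have "w a \<in> {1..n}" using permutes_in_image[OF wp] by auto
        moreover have "k < w a" using m2[OF w, of a] a by auto
        ultimately show "y \<in> {Suc k..n}" using a by auto
      qed
      show "inj_on w {Suc k..n}" using permutes_inj_on[OF wp] .
    qed simp
    then show ?thesis using permutes_inj_on[OF wp] by (simp add: bij_betw_def)
  qed
  have bij: "bij_betw F (Y n J) (Y k J0 \<times> PP)"
  proof (rule bij_betwI')
    fix w w' assume w: "w \<in> Y n J" and w': "w' \<in> Y n J"
    show "(F w = F w') = (w = w')"
    proof
      assume "F w = F w'"
      then have "(\<lambda>a. if a \<le> k then w a else a) = (\<lambda>a. if a \<le> k then w' a else a)"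
        "(\<lambda>a. if k < a then w a else a) = (\<lambda>a. if k < a then w' a else a)" by (auto simp: F_def)
      then have "w a = w' a" for a by (cases "a \<le> k") (metis not_le)+
      then show "w = w'" by auto
    qed simp
  next
    fix w assume w: "w \<in> Y n J"
    have wp: "w permutes {1..n}" and c: "\<forall>a. conn J a (w a)" using w by (auto simp: Y_def)
    have p1: "(\<lambda>a. if a \<le> k then w a else a) permutes {1..k}"
    proof (rule bij_imp_permutes)
      show "bij_betw (\<lambda>a. if a \<le> k then w a else a) {1..k} {1..k}"
        using b1[OF w] by (rule bij_betw_cong[THEN iffD1, rotated]) auto
      fix x assume "x \<notin> {1..k}"
      then show "(if x \<le> k then w x else x) = x" using permutes_not_in[OF wp, of 0] by (cases "x = 0") auto
    qed
    have c1: "conn J0 a (if a \<le> k then w a else a)" for a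
    proof (cases "a \<le> k")
      case True
      have "w a \<le> k" by (rule m1[OF w True])
      then show ?thesis using True c Jlow unfolding conn_def by auto
    qed simp
    have p2: "(\<lambda>a. if k < a then w a else a) permutes {Suc k..n}"
    proof (rule bij_imp_permutes)
      show "bij_betw (\<lambda>a. if k < a then w a else a) {Suc k..n} {Suc k..n}"
        using b2[OF w] by (rule bij_betw_cong[THEN iffD1, rotated]) auto
      fix x assume "x \<notin> {Suc k..n}"
      then show "(if k < x then w x else x) = x" using permutes_not_in[OF wp, of x] by auto
    qed
    show "F w \<in> Y k J0 \<times> PP" using p1 c1 p2 by (simp add: F_def Y_def PP_def)
  next
    fix z assume z: "z \<in> Y k J0 \<times> PP"
    obtain w1 w2 where zz: "z = (w1, w2)" by (cases z)
    have w1: "w1 permutes {1..k}" "\<forall>a. conn J0 a (w1 a)" and w2: "w2 permutes {Suc k..n}"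
      using z zz by (auto simp: Y_def PP_def)
    define g where "g a = (if a \<le> k then w1 a else w2 a)" for a
    have gb: "bij_betw g ({1..k} \<union> {Suc k..n}) ({1..k} \<union> {Suc k..n})"
    proof (rule bij_betw_combine)
      show "bij_betw g {1..k} {1..k}"
        using permutes_imp_bij[OF w1(1)] by (rule bij_betw_cong[THEN iffD1, rotated]) (auto simp: g_def)
      show "bij_betw g {Suc k..n} {Suc k..n}"
        using permutes_imp_bij[OF w2] by (rule bij_betw_cong[THEN iffD1, rotated]) (auto simp: g_def)
    qed auto
    have un: "{1..k} \<union> {Suc k..n} = {1..n}" using kn by auto
    have gp: "g permutes {1..n}"
    proof (rule bij_imp_permutes)
      show "bij_betw g {1..n} {1..n}" using gb un by simp
      fix x assume "x \<notin> {1..n}"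
      then show "g x = x" using permutes_not_in[OF w1(1), of x] permutes_not_in[OF w2, of x] kn
        by (auto simp: g_def)
    qed
    have gc: "conn J a (g a)" for a
    proof (cases "a \<le> k")
      case True
      then show ?thesis using w1(2) conn_mono[OF J0J] by (simp add: g_def)
    next
      case False
      show ?thesis
      proof (cases "a \<in> {Suc k..n}")
        case True
        then have "w2 a \<in> {Suc k..n}" using permutes_in_image[OF w2] by blast
        then show ?thesis using True False unfolding g_def conn_def J_def by auto
      next
        case False2: False
        then show ?thesis using False permutes_not_in[OF w2 False2] by (simp add: g_def)
      qed
    qed
    have "g \<in> Y n J" using gp gc by (simp add: Y_def)
    moreover have "F g = z"
    proof -
      have "(\<lambda>a. if a \<le> k then g a else a) = w1"
        using permutes_not_in[OF w1(1)] by (auto simp: g_def fun_eq_iff)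
      moreover have "(\<lambda>a. if k < a then g a else a) = w2"
        using permutes_not_in[OF w2] by (auto simp: g_def fun_eq_iff)
      ultimately show ?thesis by (simp add: F_def zz)
    qed
    ultimately show "\<exists>w\<in>Y n J. z = F w" by metis
  qed
  have "card (Y n J) = card (Y k J0 \<times> PP)" using bij_betw_same_card[OF bij] .
  also have "\<dots> = card (Y k J0) * card PP" by (rule card_cartesian_product)
  also have "card PP = fact (n - k)" unfolding PP_def by (rule card_permutations) auto
  finally show ?thesis by (simp add: J_def)
qed

definition hh :: "nat \<Rightarrow> nat" where "hh n = (\<Sum>J\<in>Pow {1..<n}. card (Y n J))"

lemma hh_0: "hh 0 = 1"
proof -
  have "Y 0 {} = {id}" by (auto simp: Y_def)
  then show ?thesis by (simp add: hh_def)
qed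

lemma Pow_decomp:
  assumes "1 \<le> n"
  shows "Pow {1..<n} = (\<Union>k<n. (\<lambda>J0. J0 \<union> {Suc k..<n}) ` Pow {1..<k})"
proof
  show "(\<Union>k<n. (\<lambda>J0. J0 \<union> {Suc k..<n}) ` Pow {1..<k}) \<subseteq> Pow {1..<n}" by auto
  show "Pow {1..<n} \<subseteq> (\<Union>k<n. (\<lambda>J0. J0 \<union> {Suc k..<n}) ` Pow {1..<k})"
  proof
    fix J assume J: "J \<in> Pow {1..<n}"
    define k where "k = Max (insert 0 ({1..<n} - J))"
    have fin: "finite (insert 0 ({1..<n} - J))" by simp
    have kin: "k \<in> insert 0 ({1..<n} - J)" unfolding k_def by (rule Max_in[OF fin]) simp
    have kmax: "x \<in> {1..<n} - J \<Longrightarrow> x \<le> k" for x unfolding k_def using fin by auto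
    have kn: "k < n" using kin assms by auto
    have kJ: "k \<notin> J" using kin J by auto
    have "J = (J \<inter> {1..<k}) \<union> {Suc k..<n}"
    proof
      show "J \<subseteq> J \<inter> {1..<k} \<union> {Suc k..<n}"
      proof
        fix x assume "x \<in> J"
        then show "x \<in> J \<inter> {1..<k} \<union> {Suc k..<n}" using J kJ by (cases "x < k") (auto simp: not_less le_eq_less_or_eq)
      qed
      show "J \<inter> {1..<k} \<union> {Suc k..<n} \<subseteq> J"
      proof
        fix x assume "x \<in> J \<inter> {1..<k} \<union> {Suc k..<n}"
        then show "x \<in> J" using kmax[of x] by (cases "x \<in> J") auto
      qed
    qed
    then show "J \<in> (\<Union>k<n. (\<lambda>J0. J0 \<union> {Suc k..<n}) ` Pow {1..<k})"
      using kn by blast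
  qed
qed

lemma hh_rec:
  assumes "1 \<le> n"
  shows "hh n = (\<Sum>k<n. hh k * fact (n - k))"
proof -
  define G where "G k = (\<lambda>J0. J0 \<union> {Suc k..<n}) ` Pow {1..<k}" for k
  have disj: "G k \<inter> G k' = {}" if "k \<in> {..<n}" "k' \<in> {..<n}" "k \<noteq> k'" for k k'
  proof (rule ccontr)
    assume "G k \<inter> G k' \<noteq> {}"
    then obtain J0 J0' where J0: "J0 \<subseteq> {1..<k}" "J0' \<subseteq> {1..<k'}" and eq: "J0 \<union> {Suc k..<n} = J0' \<union> {Suc k'..<n}"
      by (auto simp: G_def)
    show False
    proof (cases "k < k'")
      case True
      then have "k' \<in> J0 \<union> {Suc k..<n}" using that by auto
      moreover have "k' \<notin> J0' \<union> {Suc k'..<n}" using J0 by auto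
      ultimately show False using eq by simp
    next
      case False
      have "k' < k" using False that(3) by simp
      then have "k \<in> J0' \<union> {Suc k'..<n}" using \<open>k \<in> {..<n}\<close> by auto
      moreover have "k \<notin> J0 \<union> {Suc k..<n}" using J0 by auto
      ultimately show False using eq by simp
    qed
  qed
  have inj: "inj_on (\<lambda>J0. J0 \<union> {Suc k..<n}) (Pow {1..<k})" for k
  proof (rule inj_onI)
    fix A B assume A: "A \<in> Pow {1..<k}" and B: "B \<in> Pow {1..<k}" and e: "A \<union> {Suc k..<n} = B \<union> {Suc k..<n}"
    have "A = (A \<union> {Suc k..<n}) \<inter> {1..<k}" using A by auto
    also have "\<dots> = (B \<union> {Suc k..<n}) \<inter> {1..<k}" using e by simp
    also have "\<dots> = B" using B by auto
    finally show "A = B" .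
  qed
  have "hh n = (\<Sum>J\<in>(\<Union>k<n. G k). card (Y n J))" unfolding hh_def G_def using Pow_decomp[OF assms] by simp
  also have "\<dots> = (\<Sum>k<n. \<Sum>J\<in>G k. card (Y n J))"
    by (rule sum.UNION_disjoint) (simp, simp add: G_def, use disj in blast)
  also have "\<dots> = (\<Sum>k<n. \<Sum>J0\<in>Pow {1..<k}. card (Y n (J0 \<union> {Suc k..<n})))"
    unfolding G_def by (rule sum.cong[OF refl], subst sum.reindex[OF inj]) (simp add: comp_def)
  also have "\<dots> = (\<Sum>k<n. \<Sum>J0\<in>Pow {1..<k}. card (Y k J0) * fact (n - k))"
    by (rule sum.cong[OF refl], rule sum.cong[OF refl], rule Y_split) auto
  also have "\<dots> = (\<Sum>k<n. hh k * fact (n - k))"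
    by (simp add: hh_def sum_distrib_right)
  finally show ?thesis .
qed

lemma mem_le_sum: "x \<in> set xs \<Longrightarrow> (x::nat) \<le> sum_list xs"
  by (induction xs) auto

lemma comp_len: "0 \<notin> set xs \<Longrightarrow> length xs \<le> sum_list (xs::nat list)"
  by (induction xs) auto

lemma finite_comp: "finite (compositions n)"
proof (rule finite_subset)
  show "compositions n \<subseteq> {xs. set xs \<subseteq> {0..n} \<and> length xs \<le> n}"
    using mem_le_sum comp_len unfolding compositions_def by fastforce
  show "finite {xs. set xs \<subseteq> {0..n} \<and> length xs \<le> n}" by (rule finite_lists_length_le) simp
qed

definition gg :: "nat \<Rightarrow> nat" where "gg n = (\<Sum>xs\<in>compositions n. prod_list (map fact xs))"

lemma comp_0: "compositions 0 = {[]}"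
proof -
  have "xs = []" if "sum_list xs = 0" "0 \<notin> set (xs::nat list)" for xs
    using that by (cases xs) auto
  then show ?thesis unfolding compositions_def by auto
qed

lemma gg_0: "gg 0 = 1" by (simp add: gg_def comp_0)

lemma comp_decomp:
  assumes "1 \<le> n"
  shows "compositions n = (\<Union>k<n. (\<lambda>xs. xs @ [n - k]) ` compositions k)"
proof
  show "compositions n \<subseteq> (\<Union>k<n. (\<lambda>xs. xs @ [n - k]) ` compositions k)"
  proof
    fix xs assume xs: "xs \<in> compositions n"
    then have "xs \<noteq> []" using assms by (auto simp: compositions_def)
    then obtain ys m where ym: "xs = ys @ [m]" by (metis rev_exhaust)
    have m: "m \<noteq> 0" "sum_list ys + m = n" "0 \<notin> set ys" using xs ym by (auto simp: compositions_def)
    define k where "k = sum_list ys"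
    have "k < n" "m = n - k" using m by (auto simp: k_def)
    moreover have "ys \<in> compositions k" using m by (simp add: compositions_def k_def)
    ultimately show "xs \<in> (\<Union>k<n. (\<lambda>xs. xs @ [n - k]) ` compositions k)" using ym by blast
  qed
  show "(\<Union>k<n. (\<lambda>xs. xs @ [n - k]) ` compositions k) \<subseteq> compositions n"
    by (auto simp: compositions_def)
qed

lemma gg_rec:
  assumes "1 \<le> n"
  shows "gg n = (\<Sum>k<n. gg k * fact (n - k))"
proof -
  define G where "G k = (\<lambda>xs. xs @ [n - k]) ` compositions k" for k
  have disj: "G k \<inter> G k' = {}" if "k \<in> {..<n}" "k' \<in> {..<n}" "k \<noteq> k'" for k k'
    using that by (auto simp: G_def)
  have inj: "inj_on (\<lambda>xs. xs @ [n - k]) (compositions k)" for k by (rule inj_onI) simp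
  have "gg n = (\<Sum>xs\<in>(\<Union>k<n. G k). prod_list (map fact xs))"
    unfolding gg_def G_def using comp_decomp[OF assms] by simp
  also have "\<dots> = (\<Sum>k<n. \<Sum>xs\<in>G k. prod_list (map fact xs))"
    by (rule sum.UNION_disjoint) (simp, simp add: G_def finite_comp, use disj in blast)
  also have "\<dots> = (\<Sum>k<n. \<Sum>xs\<in>compositions k. prod_list (map fact (xs @ [n - k])))"
    unfolding G_def by (rule sum.cong[OF refl], subst sum.reindex[OF inj]) (simp add: comp_def)
  also have "\<dots> = (\<Sum>k<n. gg k * fact (n - k))"
    by (simp add: gg_def sum_distrib_right)
  finally show ?thesis .
qed

lemma hh_gg: "hh n = gg n"
proof (induction n rule: less_induct)
  case (less n)
  show ?case
  proof (cases "n = 0")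
    case True then show ?thesis by (simp add: hh_0 gg_0)
  next
    case False
    then have n: "1 \<le> n" by simp
    have "hh n = (\<Sum>k<n. hh k * fact (n - k))" by (rule hh_rec[OF n])
    also have "\<dots> = (\<Sum>k<n. gg k * fact (n - k))" using less.IH by simp
    also have "\<dots> = gg n" by (rule gg_rec[OF n, symmetric])
    finally show ?thesis .
  qed
qed

lemma card_Gidx: "card (Gidx n) = hh n"
proof -
  have img: "LP n = PJ n ` Pow {1..<n}"
  proof
    show "LP n \<subseteq> PJ n ` Pow {1..<n}"
    proof
      fix P assume P: "P \<in> LP n"
      have "P = PJ n (Jof P)" unfolding PJ_def by (rule LP_quotient[OF P])
      then show "P \<in> PJ n ` Pow {1..<n}" using Jof_sub[OF P] by blast
    qed
    show "PJ n ` Pow {1..<n} \<subseteq> LP n" using PJ(1) by blast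
  qed
  have inj: "inj_on (PJ n) (Pow {1..<n})"
    by (rule inj_onI) (metis PJ(2) PowD)
  have y: "young n (PJ n J) = Y n J" if "J \<in> Pow {1..<n}" for J
    using young_iff[OF PJ(1)] PJ(2) that by (auto simp: Y_def)
  have "card (Gidx n) = (\<Sum>P\<in>LP n. card (young n P))"
    by (simp add: Gidx_Sigma finite_LP finite_young)
  also have "\<dots> = (\<Sum>J\<in>Pow {1..<n}. card (young n (PJ n J)))"
    unfolding img by (subst sum.reindex[OF inj]) (simp add: comp_def)
  also have "\<dots> = hh n" unfolding hh_def by (rule sum.cong[OF refl]) (simp add: y)
  finally show ?thesis .
qed

theorem card_formula: "card (Gidx n) = (\<Sum>xs\<in>compositions n. prod_list (map fact xs))"
  using card_Gidx hh_gg by (simp add: gg_def)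


theorem theorem5p4:
  fixes n :: nat
  assumes "n \<ge> 1"
  shows "finite (Gidx n)
    \<and> (\<forall>a\<in>FA n. \<exists>c. (\<forall>x. x \<notin> Gidx n \<longrightarrow> c x = 0) \<and>
          a - (\<Sum>x\<in>Gidx n. fa_scal (c x) (basis_elt n x)) \<in> bH_ideal n)
    \<and> (\<forall>c. (\<Sum>x\<in>Gidx n. fa_scal (c x) (basis_elt n x)) \<in> bH_ideal n
          \<longrightarrow> (\<forall>x\<in>Gidx n. c x = 0))
    \<and> card (Gidx n) = (\<Sum>xs\<in>compositions n. prod_list (map fact xs))"
proof (intro conjI)
  show "finite (Gidx n)" by (rule finite_Gidx)
  show "\<forall>a\<in>FA n. \<exists>c. (\<forall>x. x \<notin> Gidx n \<longrightarrow> c x = 0) \<and>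
          a - (\<Sum>x\<in>Gidx n. fa_scal (c x) (basis_elt n x)) \<in> bH_ideal n"
    using spanning unfolding Span_def eqv_def by blast
  show "\<forall>c. (\<Sum>x\<in>Gidx n. fa_scal (c x) (basis_elt n x)) \<in> bH_ideal n
          \<longrightarrow> (\<forall>x\<in>Gidx n. c x = 0)"
    using independence by blast
  show "card (Gidx n) = (\<Sum>xs\<in>compositions n. prod_list (map fact xs))" by (rule card_formula)
qed

end
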